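(* Let $1\le p\le\infty$, let $\alpha \in L^{1}(\mathbb{R})$ and let $w\in C^{1}(\mathbb{R})$ with $w(0)=0$. Consider the Cauchy problem $$u_{tt}(x,t)=\int_{\mathbb{R}} \alpha(y-x)\, w\big(u(y,t)-u(x,t)\big)\,dy,\quad x\in\mathbb{R},\ t>0,\qquad u(x,0)=\varphi(x),\ u_t(x,0)=\psi(x).$$ Then for initial data $\varphi,\psi\in L^{p}(\mathbb{R})\cap L^\infty(\mathbb{R})$ there is some $T>0$ such that this Cauchy problem is well posed with solution in $C^{2}([0,T],L^{p}(\mathbb{R})\cap L^\infty(\mathbb{R}))$.
   Context: $L^p(\mathbb{R})\cap L^\infty(\mathbb{R})$ carries the norm $\|u\|_p+\|u\|_\infty$. "Well posed with solution in $C^2([0,T],X)$" means: there exists a unique solution $u\in C^2([0,T],X)$ of the Cauchy problem, and the solution depends continuously on the initial data $(\varphi,\psi)\in X\times X$ (in the norm of $C([0,T],X)$). *)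

theory Defs
  imports "HOL-Analysis.Analysis" "HOL-Probability.Essential_Supremum"
begin

text \<open>Exponent p ranges over [1, infinity] as an ennreal; p = top means L-infinity.
  Elements of the space are represented by real functions on the real line;
  equality in the space is equality almost everywhere.\<close>

definition Linf_norm :: "(real \<Rightarrow> real) \<Rightarrow> real" where
  "Linf_norm f = real_of_ereal (esssup lborel (\<lambda>x. ereal \<bar>f x\<bar>))"

definition Lp_norm :: "ennreal \<Rightarrow> (real \<Rightarrow> real) \<Rightarrow> real" where
  "Lp_norm p f = (if p = top then Linf_norm f
     else enn2real (\<integral>\<^sup>+ x. ennreal (\<bar>f x\<bar> powr enn2real p) \<partial>lborel) powr (1 / enn2real p))"

definition XSp :: "ennreal \<Rightarrow> (real \<Rightarrow> real) set" where
  "XSp p = {f. f \<in> borel_measurable lborel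
              \<and> (p \<noteq> top \<longrightarrow> (\<integral>\<^sup>+ x. ennreal (\<bar>f x\<bar> powr enn2real p) \<partial>lborel) < top)
              \<and> esssup lborel (\<lambda>x. ereal \<bar>f x\<bar>) < top}"

definition Xnorm :: "ennreal \<Rightarrow> (real \<Rightarrow> real) \<Rightarrow> real" where
  "Xnorm p f = Lp_norm p f + Linf_norm f"

definition X_continuous :: "ennreal \<Rightarrow> real \<Rightarrow> (real \<Rightarrow> real \<Rightarrow> real) \<Rightarrow> bool" where
  "X_continuous p T u \<longleftrightarrow> (\<forall>t\<in>{0..T}. u t \<in> XSp p \<and>
      ((\<lambda>s. Xnorm p (\<lambda>x. u s x - u t x)) \<longlongrightarrow> 0) (at t within {0..T}))"

definition X_has_derivative :: "ennreal \<Rightarrow> real \<Rightarrow> (real \<Rightarrow> real \<Rightarrow> real) \<Rightarrow> (real \<Rightarrow> real \<Rightarrow> real) \<Rightarrow> bool" where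
  "X_has_derivative p T u v \<longleftrightarrow> (\<forall>t\<in>{0..T}. u t \<in> XSp p \<and> v t \<in> XSp p \<and>
      ((\<lambda>s. Xnorm p (\<lambda>x. (u s x - u t x) / (s - t) - v t x)) \<longlongrightarrow> 0) (at t within {0..T}))"

definition X_C2 :: "ennreal \<Rightarrow> real \<Rightarrow> (real \<Rightarrow> real \<Rightarrow> real) \<Rightarrow> (real \<Rightarrow> real \<Rightarrow> real)
    \<Rightarrow> (real \<Rightarrow> real \<Rightarrow> real) \<Rightarrow> bool" where
  "X_C2 p T u u1 u2 \<longleftrightarrow> X_has_derivative p T u u1 \<and> X_has_derivative p T u1 u2
      \<and> X_continuous p T u2"

definition peri_rhs :: "(real \<Rightarrow> real) \<Rightarrow> (real \<Rightarrow> real) \<Rightarrow> (real \<Rightarrow> real) \<Rightarrow> real \<Rightarrow> real" where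
  "peri_rhs \<alpha> w v x = (\<integral> y. \<alpha> (y - x) * w (v y - v x) \<partial>lborel)"

definition is_solution :: "ennreal \<Rightarrow> (real \<Rightarrow> real) \<Rightarrow> (real \<Rightarrow> real) \<Rightarrow> real
    \<Rightarrow> (real \<Rightarrow> real) \<Rightarrow> (real \<Rightarrow> real) \<Rightarrow> (real \<Rightarrow> real \<Rightarrow> real) \<Rightarrow> bool" where
  "is_solution p \<alpha> w T \<phi> \<psi> u \<longleftrightarrow> (\<exists>u1 u2. X_C2 p T u u1 u2
      \<and> (\<forall>t\<in>{0<..T}. AE x in lborel. u2 t x = peri_rhs \<alpha> w (u t) x)
      \<and> (AE x in lborel. u 0 x = \<phi> x)
      \<and> (AE x in lborel. u1 0 x = \<psi> x))"

definition well_posed :: "ennreal \<Rightarrow> (real \<Rightarrow> real) \<Rightarrow> (real \<Rightarrow> real) \<Rightarrow> real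
    \<Rightarrow> (real \<Rightarrow> real) \<Rightarrow> (real \<Rightarrow> real) \<Rightarrow> bool" where
  "well_posed p \<alpha> w T \<phi> \<psi> \<longleftrightarrow>
     (\<exists>u. is_solution p \<alpha> w T \<phi> \<psi> u
        \<and> (\<forall>v. is_solution p \<alpha> w T \<phi> \<psi> v \<longrightarrow> (\<forall>t\<in>{0..T}. AE x in lborel. v t x = u t x))
        \<and> (\<forall>\<epsilon>>0. \<exists>\<delta>>0. \<forall>\<phi>' \<psi>'. \<phi>' \<in> XSp p \<and> \<psi>' \<in> XSp p
              \<and> Xnorm p (\<lambda>x. \<phi>' x - \<phi> x) + Xnorm p (\<lambda>x. \<psi>' x - \<psi> x) < \<delta> \<longrightarrow>
              (\<exists>v. is_solution p \<alpha> w T \<phi>' \<psi>' v)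
              \<and> (\<forall>v. is_solution p \<alpha> w T \<phi>' \<psi>' v \<longrightarrow>
                    (\<forall>t\<in>{0..T}. Xnorm p (\<lambda>x. v t x - u t x) < \<epsilon>))))"

end

theory Submission
  imports Defs
begin


lemma enn2real_ge1: "1 \<le> p \<Longrightarrow> p \<noteq> top \<Longrightarrow> 1 \<le> enn2real p"
  using enn2real_mono[of 1 p] by (simp add: less_top)

lemma esssup_abs_nonneg: fixes f :: "real \<Rightarrow> real" shows "0 \<le> esssup lborel (\<lambda>x. ereal \<bar>f x\<bar>)"
proof (cases "(\<lambda>x. ereal \<bar>f x\<bar>) \<in> borel_measurable lborel")
  case True
  have "esssup lborel (\<lambda>x::real. (0::ereal)) \<le> esssup lborel (\<lambda>x. ereal \<bar>f x\<bar>)"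
    by (rule esssup_mono) auto
  moreover have "esssup lborel (\<lambda>x::real. (0::ereal)) = 0"
    by (rule esssup_const) simp
  ultimately show ?thesis by simp
next
  case False thus ?thesis by (simp add: esssup_non_measurable)
qed

lemma linf_nonneg: "0 \<le> Linf_norm f"
  unfolding Linf_norm_def using esssup_abs_nonneg[of f] by (simp add: real_of_ereal_pos)

lemma linf_AE:
  fixes f :: "real \<Rightarrow> real"
  assumes "esssup lborel (\<lambda>x. ereal \<bar>f x\<bar>) < top"
  shows "AE x in lborel. \<bar>f x\<bar> \<le> Linf_norm f"
proof -
  let ?e = "esssup lborel (\<lambda>x. ereal \<bar>f x\<bar>)"
  have "?e = ereal (Linf_norm f)"
    using assms esssup_abs_nonneg[of f] unfolding Linf_norm_def
    by (cases ?e) auto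
  then show ?thesis using esssup_AE[of "\<lambda>x. ereal \<bar>f x\<bar>" lborel]
    by (auto elim!: eventually_mono)
qed

lemma linf_le:
  fixes f :: "real \<Rightarrow> real"
  assumes "f \<in> borel_measurable lborel" "0 \<le> c" "AE x in lborel. \<bar>f x\<bar> \<le> c"
  shows "Linf_norm f \<le> c" "esssup lborel (\<lambda>x. ereal \<bar>f x\<bar>) < top"
proof -
  have "esssup lborel (\<lambda>x. ereal \<bar>f x\<bar>) \<le> ereal c"
    by (rule esssup_I) (use assms in auto)
  then show "esssup lborel (\<lambda>x. ereal \<bar>f x\<bar>) < top" by (rule le_less_trans) (simp add: top_ereal_def)
  show "Linf_norm f \<le> c"
    using \<open>_ \<le> ereal c\<close> esssup_abs_nonneg[of f] assms(2) unfolding Linf_norm_def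
    by (cases "esssup lborel (\<lambda>x. ereal \<bar>f x\<bar>)") auto
qed

lemma linf_cong:
  assumes "f \<in> borel_measurable lborel" "g \<in> borel_measurable lborel" "AE x in lborel. f x = g x"
  shows "Linf_norm f = Linf_norm g"
  unfolding Linf_norm_def
  by (subst esssup_AE_cong[of "\<lambda>x. ereal \<bar>f x\<bar>" lborel "\<lambda>x. ereal \<bar>g x\<bar>"]) (use assms in auto)

definition Ip :: "real \<Rightarrow> (real \<Rightarrow> real) \<Rightarrow> ennreal" where
  "Ip P f = (\<integral>\<^sup>+ x. ennreal (\<bar>f x\<bar> powr P) \<partial>lborel)"

lemma Lp_norm_fin: "p \<noteq> top \<Longrightarrow> Lp_norm p f = enn2real (Ip (enn2real p) f) powr (1 / enn2real p)"
  by (simp add: Lp_norm_def Ip_def)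

lemma XSp_fin: "p \<noteq> top \<Longrightarrow> f \<in> XSp p \<longleftrightarrow> f \<in> borel_measurable lborel \<and> Ip (enn2real p) f < top
   \<and> esssup lborel (\<lambda>x. ereal \<bar>f x\<bar>) < top"
  by (simp add: XSp_def Ip_def)

lemma XSp_top: "f \<in> XSp top \<longleftrightarrow> f \<in> borel_measurable lborel \<and> esssup lborel (\<lambda>x. ereal \<bar>f x\<bar>) < top"
  by (simp add: XSp_def)

lemma lp_nonneg: "0 \<le> Lp_norm p f"
  by (simp add: Lp_norm_def linf_nonneg)

lemma Ip_cong: "AE x in lborel. f x = g x \<Longrightarrow> Ip P f = Ip P g"
  unfolding Ip_def by (rule nn_integral_cong_AE) (auto elim!: eventually_mono)

lemma lp_cong:
  assumes "f \<in> borel_measurable lborel" "g \<in> borel_measurable lborel" "AE x in lborel. f x = g x"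
  shows "Lp_norm p f = Lp_norm p g"
proof (cases "p = top")
  case True thus ?thesis using linf_cong[OF assms] by (simp add: Lp_norm_def)
next
  case False thus ?thesis using Ip_cong[OF assms(3)] by (simp add: Lp_norm_fin)
qed

lemma Xnorm_cong:
  assumes "f \<in> borel_measurable lborel" "g \<in> borel_measurable lborel" "AE x in lborel. f x = g x"
  shows "Xnorm p f = Xnorm p g"
  using lp_cong[OF assms] linf_cong[OF assms] by (simp add: Xnorm_def)

lemma Xnorm_nonneg: "0 \<le> Xnorm p f"
  by (simp add: Xnorm_def lp_nonneg linf_nonneg)

lemma linf_le_Xnorm: "Linf_norm f \<le> Xnorm p f"
  by (simp add: Xnorm_def lp_nonneg)

lemma lp_le_Xnorm: "Lp_norm p f \<le> Xnorm p f"
  by (simp add: Xnorm_def linf_nonneg)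

lemma Ip_eq:
  assumes "p \<noteq> top" "1 \<le> p" "Ip (enn2real p) f < top"
  shows "Ip (enn2real p) f = ennreal (Lp_norm p f powr enn2real p)"
proof -
  have P: "enn2real p \<ge> 1" using enn2real_ge1 assms by auto
  have "Lp_norm p f powr enn2real p = enn2real (Ip (enn2real p) f)"
    using P by (simp add: Lp_norm_fin[OF assms(1)] powr_powr)
  then show ?thesis using assms(3) by (simp add: less_top)
qed

lemma lp_le:
  assumes "p \<noteq> top" "1 \<le> p" "0 \<le> c" "Ip (enn2real p) f \<le> ennreal (c powr enn2real p)"
  shows "Lp_norm p f \<le> c"
proof -
  have P: "enn2real p \<ge> 1" using enn2real_ge1 assms by auto
  have "enn2real (Ip (enn2real p) f) \<le> c powr enn2real p"
    using enn2real_mono[OF assms(4)] by simp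
  then have "enn2real (Ip (enn2real p) f) powr (1/enn2real p) \<le> (c powr enn2real p) powr (1/enn2real p)"
    by (intro powr_mono2) auto
  also have "\<dots> = c" using P assms(3) by (simp add: powr_powr)
  finally show ?thesis by (simp add: Lp_norm_fin[OF assms(1)])
qed


lemma powr_conv:
  fixes P u y t :: real
  assumes "1 \<le> P" "0 \<le> u" "0 \<le> y" "0 \<le> t" "t \<le> 1"
  shows "(t*u + (1-t)*y) powr P \<le> t * u powr P + (1-t) * y powr P"
proof (cases "u > 0 \<and> y > 0")
  case True
  have "(\<lambda>x::real. x powr P) ((1 - (1-t)) *\<^sub>R u + (1-t) *\<^sub>R y) \<le> (1 - (1-t)) * u powr P + (1-t) * y powr P"
    by (rule convex_onD[OF powr_convex[OF assms(1)]]) (use assms True in auto)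
  then show ?thesis by simp
next
  case False
  then consider "u = 0" | "y = 0" using assms by linarith
  then show ?thesis
  proof cases
    case 1
    have "((1-t)*y) powr P = (1-t) powr P * y powr P" using assms by (simp add: powr_mult)
    also have "\<dots> \<le> (1-t) * y powr P"
    proof (cases "t = 1")
      case False
      then have "(1-t) powr P \<le> (1-t)" using powr_le_one_le[of "1-t" P] assms by auto
      then show ?thesis by (intro mult_right_mono) auto
    qed simp
    finally show ?thesis using 1 assms by simp
  next
    case 2
    have "(t*u) powr P = t powr P * u powr P" using assms by (simp add: powr_mult)
    also have "\<dots> \<le> t * u powr P"
    proof (cases "t = 0")
      case False
      then have "t powr P \<le> t" using powr_le_one_le[of "t" P] assms by auto
      then show ?thesis by (intro mult_right_mono) auto
    qed simp
    finally show ?thesis using 2 assms by simp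
  qed
qed

lemma Ip_zero_AE:
  assumes "f \<in> borel_measurable lborel" "Ip P f = 0"
  shows "AE x in lborel. f x = 0"
proof -
  have "AE x in lborel. ennreal (\<bar>f x\<bar> powr P) = 0"
    using assms by (subst nn_integral_0_iff_AE[symmetric]) (auto simp: Ip_def)
  then show ?thesis by (auto elim!: eventually_mono)
qed

lemma Ip_add_le:
  assumes p: "p \<noteq> top" "1 \<le> p" and f: "f \<in> borel_measurable lborel" and g: "g \<in> borel_measurable lborel"
    and fi: "Ip (enn2real p) f < top" and gi: "Ip (enn2real p) g < top"
  shows "Ip (enn2real p) (\<lambda>x. f x + g x) \<le> ennreal ((Lp_norm p f + Lp_norm p g) powr enn2real p)"
proof -
  define P where "P = enn2real p"
  have P: "1 \<le> P" using enn2real_ge1 p by (auto simp: P_def)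
  define a where "a = Lp_norm p f"
  define b where "b = Lp_norm p g"
  have Ia: "Ip P f = ennreal (a powr P)" using Ip_eq[OF p fi] by (simp add: a_def P_def)
  have Ib: "Ip P g = ennreal (b powr P)" using Ip_eq[OF p gi] by (simp add: b_def P_def)
  have a0: "a \<ge> 0" "b \<ge> 0" by (auto simp: a_def b_def lp_nonneg)
  show ?thesis
  proof (cases "a = 0 \<or> b = 0")
    case True
    then show ?thesis
    proof
      assume "a = 0"
      then have "Ip P f = 0" using Ia P by simp
      then have "AE x in lborel. f x = 0" using Ip_zero_AE f by blast
      then have "Ip P (\<lambda>x. f x + g x) = Ip P g" by (intro Ip_cong) (auto elim!: eventually_mono)
      then show ?thesis using Ib \<open>a = 0\<close> by (simp add: P_def a_def b_def)
    next
      assume "b = 0"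
      then have "Ip P g = 0" using Ib P by simp
      then have "AE x in lborel. g x = 0" using Ip_zero_AE g by blast
      then have "Ip P (\<lambda>x. f x + g x) = Ip P f" by (intro Ip_cong) (auto elim!: eventually_mono)
      then show ?thesis using Ia \<open>b = 0\<close> by (simp add: P_def a_def b_def)
    qed
  next
    case False
    then have ab: "a > 0" "b > 0" using a0 by auto
    define t where "t = a / (a + b)"
    have t: "0 \<le> t" "t \<le> 1" "1 - t = b / (a+b)" using ab by (auto simp: t_def field_simps)
    define c1 where "c1 = (a+b) powr P * t / a powr P"
    define c2 where "c2 = (a+b) powr P * (1-t) / b powr P"
    have c: "c1 \<ge> 0" "c2 \<ge> 0" using t ab by (auto simp: c1_def c2_def)
    have pw: "\<bar>f x + g x\<bar> powr P \<le> c1 * \<bar>f x\<bar> powr P + c2 * \<bar>g x\<bar> powr P" for x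
    proof -
      have e: "(a+b) * (t * (\<bar>f x\<bar>/a) + (1-t) * (\<bar>g x\<bar>/b)) = \<bar>f x\<bar> + \<bar>g x\<bar>"
      proof -
        have h1: "(a+b)*t = a" using ab by (simp add: t_def)
        have h2: "(a+b)*(1-t) = b" using ab by (simp add: t(3))
        have "(a+b) * (t * (\<bar>f x\<bar>/a) + (1-t) * (\<bar>g x\<bar>/b)) = ((a+b)*t)*(\<bar>f x\<bar>/a) + ((a+b)*(1-t))*(\<bar>g x\<bar>/b)"
          by (simp only: distrib_left mult.assoc)
        then show ?thesis using ab by (simp add: h1 h2)
      qed
      have "\<bar>f x + g x\<bar> \<le> (a+b) * (t * (\<bar>f x\<bar>/a) + (1-t) * (\<bar>g x\<bar>/b))"
        unfolding e by (rule abs_triangle_ineq)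
      then have "\<bar>f x + g x\<bar> powr P \<le> ((a+b) * (t * (\<bar>f x\<bar>/a) + (1-t) * (\<bar>g x\<bar>/b))) powr P"
        using P by (intro powr_mono2) auto
      also have "\<dots> = (a+b) powr P * (t * (\<bar>f x\<bar>/a) + (1-t) * (\<bar>g x\<bar>/b)) powr P"
        using ab t by (auto intro: powr_mult)
      also have "\<dots> \<le> (a+b) powr P * (t * (\<bar>f x\<bar>/a) powr P + (1-t) * (\<bar>g x\<bar>/b) powr P)"
        using ab t P by (intro mult_left_mono powr_conv) auto
      also have "\<dots> = c1 * \<bar>f x\<bar> powr P + c2 * \<bar>g x\<bar> powr P"
        using ab by (simp add: c1_def c2_def powr_divide field_simps)
      finally show ?thesis .
    qed
    have "Ip P (\<lambda>x. f x + g x) \<le> (\<integral>\<^sup>+ x. ennreal c1 * ennreal (\<bar>f x\<bar> powr P) + ennreal c2 * ennreal (\<bar>g x\<bar> powr P) \<partial>lborel)"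
      unfolding Ip_def
      by (intro nn_integral_mono) (use pw c in \<open>auto simp flip: ennreal_mult ennreal_plus\<close>)
    also have "\<dots> = ennreal c1 * Ip P f + ennreal c2 * Ip P g"
      unfolding Ip_def using f g by (subst nn_integral_add) (auto simp: nn_integral_cmult)
    also have "\<dots> = ennreal (c1 * a powr P + c2 * b powr P)"
      using c ab by (simp add: Ia Ib ennreal_mult ennreal_plus)
    also have "c1 * a powr P + c2 * b powr P = (a+b) powr P"
      using ab t by (simp add: c1_def c2_def field_simps)
    finally show ?thesis by (simp add: P_def a_def b_def)
  qed
qed

lemma linf_add:
  assumes "f \<in> borel_measurable lborel" "g \<in> borel_measurable lborel"
    "esssup lborel (\<lambda>x. ereal \<bar>f x\<bar>) < top" "esssup lborel (\<lambda>x. ereal \<bar>g x\<bar>) < top"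
  shows "Linf_norm (\<lambda>x. f x + g x) \<le> Linf_norm f + Linf_norm g"
    "esssup lborel (\<lambda>x. ereal \<bar>f x + g x\<bar>) < top"
proof -
  have "AE x in lborel. \<bar>f x + g x\<bar> \<le> Linf_norm f + Linf_norm g"
    using linf_AE[OF assms(3)] linf_AE[OF assms(4)] by eventually_elim auto
  then show "Linf_norm (\<lambda>x. f x + g x) \<le> Linf_norm f + Linf_norm g"
    "esssup lborel (\<lambda>x. ereal \<bar>f x + g x\<bar>) < top"
    using linf_le[of "\<lambda>x. f x + g x" "Linf_norm f + Linf_norm g"] assms
    by (auto simp: linf_nonneg)
qed

lemma XSp_add:
  assumes "1 \<le> p" "f \<in> XSp p" "g \<in> XSp p"
  shows "(\<lambda>x. f x + g x) \<in> XSp p" "Lp_norm p (\<lambda>x. f x + g x) \<le> Lp_norm p f + Lp_norm p g"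
    "Linf_norm (\<lambda>x. f x + g x) \<le> Linf_norm f + Linf_norm g"
proof -
  have m: "f \<in> borel_measurable lborel" "g \<in> borel_measurable lborel"
    "esssup lborel (\<lambda>x. ereal \<bar>f x\<bar>) < top" "esssup lborel (\<lambda>x. ereal \<bar>g x\<bar>) < top"
    using assms by (auto simp: XSp_def)
  note L = linf_add[OF m]
  show "Linf_norm (\<lambda>x. f x + g x) \<le> Linf_norm f + Linf_norm g" by (rule L(1))
  show "(\<lambda>x. f x + g x) \<in> XSp p" "Lp_norm p (\<lambda>x. f x + g x) \<le> Lp_norm p f + Lp_norm p g"
  proof -
    have "(\<lambda>x. f x + g x) \<in> XSp p \<and> Lp_norm p (\<lambda>x. f x + g x) \<le> Lp_norm p f + Lp_norm p g"
    proof (cases "p = top")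
      case True
      then show ?thesis using L m by (simp add: XSp_top Lp_norm_def)
    next
      case False
      have fi: "Ip (enn2real p) f < top" "Ip (enn2real p) g < top"
        using assms False by (auto simp: XSp_fin)
      note I = Ip_add_le[OF False assms(1) m(1,2) fi]
      have "Ip (enn2real p) (\<lambda>x. f x + g x) < top"
        using I by (rule le_less_trans) simp
      moreover have "Lp_norm p (\<lambda>x. f x + g x) \<le> Lp_norm p f + Lp_norm p g"
        by (rule lp_le[OF False assms(1) _ I]) (simp add: lp_nonneg add_nonneg_nonneg)
      ultimately show ?thesis using L m False by (simp add: XSp_fin)
    qed
    then show "(\<lambda>x. f x + g x) \<in> XSp p" "Lp_norm p (\<lambda>x. f x + g x) \<le> Lp_norm p f + Lp_norm p g"
      by auto
  qed
qed

lemma linf_zero: "Linf_norm (\<lambda>x. 0) = 0"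
  using linf_le[of "\<lambda>x. 0" 0] linf_nonneg[of "\<lambda>x. 0"] by auto

lemma linf_zero_esssup: "esssup lborel (\<lambda>x::real. ereal \<bar>0\<bar>) < top"
  using linf_le[of "\<lambda>x. 0" 0] by auto

lemma Ip_scale:
  assumes "0 < P" "f \<in> borel_measurable lborel"
  shows "Ip P (\<lambda>x. c * f x) = ennreal (\<bar>c\<bar> powr P) * Ip P f"
  unfolding Ip_def using assms
  by (subst nn_integral_cmult[symmetric]) (auto simp: abs_mult powr_mult ennreal_mult)

lemma linf_scale:
  assumes "f \<in> borel_measurable lborel" "esssup lborel (\<lambda>x. ereal \<bar>f x\<bar>) < top"
  shows "Linf_norm (\<lambda>x. c * f x) = \<bar>c\<bar> * Linf_norm f"
    "esssup lborel (\<lambda>x. ereal \<bar>c * f x\<bar>) < top"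
proof -
  have A: "AE x in lborel. \<bar>c * f x\<bar> \<le> \<bar>c\<bar> * Linf_norm f"
    using linf_AE[OF assms(2)] by (auto elim!: eventually_mono simp: abs_mult mult_left_mono)
  have m: "(\<lambda>x. c * f x) \<in> borel_measurable lborel" using assms by auto
  note L = linf_le[OF m _ A]
  show es: "esssup lborel (\<lambda>x. ereal \<bar>c * f x\<bar>) < top" using L by (simp add: linf_nonneg)
  show "Linf_norm (\<lambda>x. c * f x) = \<bar>c\<bar> * Linf_norm f"
  proof (cases "c = 0")
    case True then show ?thesis using linf_zero by simp
  next
    case False
    have B0: "\<bar>f x\<bar> \<le> \<bar>1/c\<bar> * L" if "\<bar>c * f x\<bar> \<le> L" for x L
      using that False by (simp add: abs_mult field_simps)
    have B: "AE x in lborel. \<bar>f x\<bar> \<le> \<bar>1/c\<bar> * Linf_norm (\<lambda>x. c * f x)"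
      using linf_AE[OF es] B0
      by (auto elim!: eventually_mono)
    have "Linf_norm f \<le> \<bar>1/c\<bar> * Linf_norm (\<lambda>x. c * f x)"
      using linf_le(1)[OF assms(1) _ B] by (simp add: linf_nonneg)
    then have "\<bar>c\<bar> * Linf_norm f \<le> Linf_norm (\<lambda>x. c * f x)"
      using False by (simp add: field_simps)
    then show ?thesis using L(1) by (simp add: linf_nonneg)
  qed
qed

lemma XSp_scale:
  assumes "1 \<le> p" "f \<in> XSp p"
  shows "(\<lambda>x. c * f x) \<in> XSp p" "Lp_norm p (\<lambda>x. c * f x) = \<bar>c\<bar> * Lp_norm p f"
    "Linf_norm (\<lambda>x. c * f x) = \<bar>c\<bar> * Linf_norm f"
proof -
  have m: "f \<in> borel_measurable lborel" "esssup lborel (\<lambda>x. ereal \<bar>f x\<bar>) < top"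
    using assms by (auto simp: XSp_def)
  note L = linf_scale[OF m, of c]
  show "Linf_norm (\<lambda>x. c * f x) = \<bar>c\<bar> * Linf_norm f" by (rule L(1))
  have "(\<lambda>x. c * f x) \<in> XSp p \<and> Lp_norm p (\<lambda>x. c * f x) = \<bar>c\<bar> * Lp_norm p f"
  proof (cases "p = top")
    case True then show ?thesis using L m by (simp add: XSp_top Lp_norm_def)
  next
    case False
    have P: "1 \<le> enn2real p" using enn2real_ge1 assms False by auto
    have fi: "Ip (enn2real p) f < top" using assms False by (auto simp: XSp_fin)
    have I: "Ip (enn2real p) (\<lambda>x. c * f x) = ennreal (\<bar>c\<bar> powr enn2real p) * Ip (enn2real p) f"
      using P m by (intro Ip_scale) auto
    have "Ip (enn2real p) (\<lambda>x. c * f x) < top" using I fi by (simp add: ennreal_mult_less_top)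
    moreover have "Lp_norm p (\<lambda>x. c * f x) = \<bar>c\<bar> * Lp_norm p f"
      using P by (simp add: Lp_norm_fin[OF False] I enn2real_mult powr_mult powr_powr)
    ultimately show ?thesis using L m False by (simp add: XSp_fin)
  qed
  then show "(\<lambda>x. c * f x) \<in> XSp p" "Lp_norm p (\<lambda>x. c * f x) = \<bar>c\<bar> * Lp_norm p f" by auto
qed


lemma XSp_meas: "f \<in> XSp p \<Longrightarrow> f \<in> borel_measurable lborel"
  by (simp add: XSp_def)

lemma XSp_ess: "f \<in> XSp p \<Longrightarrow> esssup lborel (\<lambda>x. ereal \<bar>f x\<bar>) < top"
  by (simp add: XSp_def)

lemma XSp_dom:
  assumes p: "1 \<le> p" and g: "g \<in> XSp p" and f: "f \<in> borel_measurable lborel"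
    and le: "AE x in lborel. \<bar>f x\<bar> \<le> \<bar>g x\<bar>"
  shows "f \<in> XSp p" "Lp_norm p f \<le> Lp_norm p g" "Linf_norm f \<le> Linf_norm g"
proof -
  have A: "AE x in lborel. \<bar>f x\<bar> \<le> Linf_norm g"
    using le linf_AE[OF XSp_ess[OF g]] by eventually_elim auto
  note L = linf_le[OF f linf_nonneg A]
  show "Linf_norm f \<le> Linf_norm g" by (rule L(1))
  have "f \<in> XSp p \<and> Lp_norm p f \<le> Lp_norm p g"
  proof (cases "p = top")
    case True then show ?thesis using L f by (simp add: XSp_top Lp_norm_def)
  next
    case False
    have P: "1 \<le> enn2real p" using enn2real_ge1 p False by auto
    have gi: "Ip (enn2real p) g < top" using g False by (simp add: XSp_fin)
    have "Ip (enn2real p) f \<le> Ip (enn2real p) g"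
      unfolding Ip_def using le P
      by (intro nn_integral_mono_AE) (auto elim!: eventually_mono intro!: ennreal_leI powr_mono2)
    also have "\<dots> = ennreal (Lp_norm p g powr enn2real p)" by (rule Ip_eq[OF False p gi])
    finally have I: "Ip (enn2real p) f \<le> ennreal (Lp_norm p g powr enn2real p)" .
    have "Ip (enn2real p) f < top" using I by (rule le_less_trans) simp
    moreover have "Lp_norm p f \<le> Lp_norm p g" by (rule lp_le[OF False p lp_nonneg I])
    ultimately show ?thesis using L f False by (simp add: XSp_fin)
  qed
  then show "f \<in> XSp p" "Lp_norm p f \<le> Lp_norm p g" by auto
qed

lemma Xnorm_dom:
  assumes p: "1 \<le> p" and g: "g \<in> XSp p" and f: "f \<in> borel_measurable lborel"
    and le: "AE x in lborel. \<bar>f x\<bar> \<le> \<bar>g x\<bar>"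
  shows "Xnorm p f \<le> Xnorm p g"
  using XSp_dom[OF assms] by (simp add: Xnorm_def)

lemma XSp_zero: "(\<lambda>x. 0) \<in> XSp p"
  using linf_zero_esssup by (auto simp: XSp_def)

lemma lp_zero: "Lp_norm p (\<lambda>x. 0) = 0"
  by (cases "p = top") (auto simp: Lp_norm_def linf_zero)

lemma Xnorm_zero: "Xnorm p (\<lambda>x. 0) = 0"
  by (simp add: Xnorm_def lp_zero linf_zero)

lemma Xnorm_add:
  assumes "1 \<le> p" "f \<in> XSp p" "g \<in> XSp p"
  shows "Xnorm p (\<lambda>x. f x + g x) \<le> Xnorm p f + Xnorm p g"
  using XSp_add[OF assms] by (simp add: Xnorm_def)

lemma Xnorm_scale:
  assumes "1 \<le> p" "f \<in> XSp p"
  shows "Xnorm p (\<lambda>x. c * f x) = \<bar>c\<bar> * Xnorm p f"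
  using XSp_scale[OF assms] by (simp add: Xnorm_def algebra_simps)

lemma XSp_diff:
  assumes "1 \<le> p" "f \<in> XSp p" "g \<in> XSp p"
  shows "(\<lambda>x. f x - g x) \<in> XSp p"
proof -
  have "(\<lambda>x. f x + (-1) * g x) \<in> XSp p"
    using XSp_add(1)[OF assms(1,2) XSp_scale(1)[OF assms(1,3), where c="-1"]] by simp
  then show ?thesis by simp
qed

lemma XSp_uminus:
  assumes "1 \<le> p" "f \<in> XSp p"
  shows "(\<lambda>x. - f x) \<in> XSp p"
  using XSp_scale(1)[OF assms, of "-1"] by simp

lemma Xnorm_uminus:
  assumes "1 \<le> p" "f \<in> XSp p"
  shows "Xnorm p (\<lambda>x. - f x) = Xnorm p f"
  using Xnorm_scale[OF assms, of "-1"] by simp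

lemma Xnorm_commute:
  assumes "1 \<le> p" "f \<in> XSp p" "g \<in> XSp p"
  shows "Xnorm p (\<lambda>x. f x - g x) = Xnorm p (\<lambda>x. g x - f x)"
  using Xnorm_uminus[OF assms(1) XSp_diff[OF assms]] by simp

lemma Xnorm_tri:
  assumes "1 \<le> p" "f \<in> XSp p" "g \<in> XSp p" "h \<in> XSp p"
  shows "Xnorm p (\<lambda>x. f x - h x) \<le> Xnorm p (\<lambda>x. f x - g x) + Xnorm p (\<lambda>x. g x - h x)"
  using Xnorm_add[OF assms(1) XSp_diff[OF assms(1,2,3)] XSp_diff[OF assms(1,3,4)]] by simp

lemma Xnorm_eq0:
  assumes "f \<in> XSp p" "Xnorm p f = 0"
  shows "AE x in lborel. f x = 0"
proof -
  have "Linf_norm f = 0" using assms(2) lp_nonneg[of p f] linf_nonneg[of f] by (simp add: Xnorm_def)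
  then show ?thesis using linf_AE[OF XSp_ess[OF assms(1)]] by (auto elim!: eventually_mono)
qed

lemma XSp_complete_core:
  fixes f :: "nat \<Rightarrow> real \<Rightarrow> real" and N :: "nat \<Rightarrow> nat" and e :: "nat \<Rightarrow> real"
  assumes p: "1 \<le> p" and f: "\<And>n. f n \<in> XSp p"
    and e: "\<And>k n m. n \<ge> N k \<Longrightarrow> m \<ge> N k \<Longrightarrow>
       Lp_norm p (\<lambda>x. f n x - f m x) \<le> e k \<and> Linf_norm (\<lambda>x. f n x - f m x) \<le> e k"
    and ez: "\<And>\<epsilon>. \<epsilon> > 0 \<Longrightarrow> \<exists>k. e k < \<epsilon>"
  shows "\<exists>g\<in>XSp p. \<forall>k n. n \<ge> N k \<longrightarrow>
     Lp_norm p (\<lambda>x. f n x - g x) \<le> e k \<and> Linf_norm (\<lambda>x. f n x - g x) \<le> e k"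
proof -
  have e0: "0 \<le> e k" for k using e[of k "N k" "N k"] linf_nonneg[of "\<lambda>x. f (N k) x - f (N k) x"] by auto
  have fm[measurable]: "f n \<in> borel_measurable lborel" for n using f[of n] by (simp add: XSp_def)
  have AEb: "AE x in lborel. \<forall>k n m. n \<ge> N k \<longrightarrow> m \<ge> N k \<longrightarrow> \<bar>f n x - f m x\<bar> \<le> e k"
  proof -
    have "AE x in lborel. n \<ge> N k \<longrightarrow> m \<ge> N k \<longrightarrow> \<bar>f n x - f m x\<bar> \<le> e k" for k n m
    proof (cases "n \<ge> N k \<and> m \<ge> N k")
      case True
      have "AE x in lborel. \<bar>f n x - f m x\<bar> \<le> Linf_norm (\<lambda>x. f n x - f m x)"
        by (rule linf_AE[OF XSp_ess[OF XSp_diff[OF p f f]]])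
      then show ?thesis using e[of k n m] True by (auto elim!: eventually_mono)
    qed auto
    then show ?thesis by (simp add: AE_all_countable)
  qed
  define g where "g x = lim (\<lambda>n. f n x)" for x
  have gm[measurable]: "g \<in> borel_measurable lborel" unfolding g_def by measurable
  have AEc: "AE x in lborel. (\<forall>k n. n \<ge> N k \<longrightarrow> \<bar>f n x - g x\<bar> \<le> e k) \<and> (\<lambda>n. f n x) \<longlonglongrightarrow> g x"
    using AEb
  proof eventually_elim
    case (elim x)
    have "Cauchy (\<lambda>n. f n x)"
    proof (rule metric_CauchyI)
      fix \<epsilon> :: real assume "\<epsilon> > 0"
      then obtain k where "e k < \<epsilon>" using ez by blast
      then show "\<exists>M. \<forall>m\<ge>M. \<forall>n\<ge>M. dist (f m x) (f n x) < \<epsilon>"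
        using elim by (intro exI[of _ "N k"]) (force simp: dist_real_def)
    qed
    then have lim: "(\<lambda>n. f n x) \<longlonglongrightarrow> g x"
      unfolding g_def by (simp add: Cauchy_convergent_iff convergent_LIMSEQ_iff)
    have "\<bar>f n x - g x\<bar> \<le> e k" if "n \<ge> N k" for k n
    proof (rule LIMSEQ_le_const2)
      show "(\<lambda>m. \<bar>f n x - f m x\<bar>) \<longlonglongrightarrow> \<bar>f n x - g x\<bar>" by (intro tendsto_intros lim)
      show "\<exists>M. \<forall>m\<ge>M. \<bar>f n x - f m x\<bar> \<le> e k" using elim that by (intro exI[of _ "N k"]) auto
    qed
    then show ?case using lim by auto
  qed
  have main: "(\<lambda>x. f n x - g x) \<in> XSp p \<and> Lp_norm p (\<lambda>x. f n x - g x) \<le> e k \<and> Linf_norm (\<lambda>x. f n x - g x) \<le> e k"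
    if n: "n \<ge> N k" for n k
  proof -
    have A: "AE x in lborel. \<bar>f n x - g x\<bar> \<le> e k" using AEc n by (auto elim!: eventually_mono)
    note L = linf_le[OF _ e0 A]
    show ?thesis
    proof (cases "p = top")
      case True then show ?thesis using L by (simp add: XSp_top Lp_norm_def)
    next
      case False
      define P where "P = enn2real p"
      have P: "1 \<le> P" using enn2real_ge1 p False by (auto simp: P_def)
      have "Ip P (\<lambda>x. f n x - g x) = (\<integral>\<^sup>+ x. liminf (\<lambda>m. ennreal (\<bar>f n x - f m x\<bar> powr P)) \<partial>lborel)"
        unfolding Ip_def
      proof (rule nn_integral_cong_AE)
        show "AE x in lborel. ennreal (\<bar>f n x - g x\<bar> powr P) = liminf (\<lambda>m. ennreal (\<bar>f n x - f m x\<bar> powr P))"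
          using AEc
        proof eventually_elim
          case (elim x)
          have "(\<lambda>m. ennreal (\<bar>f n x - f m x\<bar> powr P)) \<longlonglongrightarrow> ennreal (\<bar>f n x - g x\<bar> powr P)"
            using P elim by (intro tendsto_ennrealI tendsto_powr2 tendsto_intros) auto
          then show ?case by (rule lim_imp_Liminf[symmetric, rotated]) simp
        qed
      qed
      also have "\<dots> \<le> liminf (\<lambda>m. Ip P (\<lambda>x. f n x - f m x))"
        unfolding Ip_def by (rule nn_integral_liminf) simp
      also have "\<dots> \<le> liminf (\<lambda>m. ennreal (e k powr P))"
      proof (rule Liminf_mono)
        show "\<forall>\<^sub>F m in sequentially. Ip P (\<lambda>x. f n x - f m x) \<le> ennreal (e k powr P)"
          unfolding eventually_sequentially
        proof (intro exI[of _ "N k"] allI impI)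
          fix m assume m: "m \<ge> N k"
          have d: "(\<lambda>x. f n x - f m x) \<in> XSp p" by (rule XSp_diff[OF p f f])
          have "Ip P (\<lambda>x. f n x - f m x) = ennreal (Lp_norm p (\<lambda>x. f n x - f m x) powr P)"
            unfolding P_def by (rule Ip_eq[OF False p]) (use d False in \<open>simp add: XSp_fin\<close>)
          also have "\<dots> \<le> ennreal (e k powr P)"
            using e[OF n m] P by (intro ennreal_leI powr_mono2) (auto simp: lp_nonneg)
          finally show "Ip P (\<lambda>x. f n x - f m x) \<le> ennreal (e k powr P)" .
        qed
      qed
      also have "\<dots> = ennreal (e k powr P)" by (simp add: Liminf_const)
      finally have I: "Ip P (\<lambda>x. f n x - g x) \<le> ennreal (e k powr P)" .
      have "Ip P (\<lambda>x. f n x - g x) < top" using I by (rule le_less_trans) simp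
      moreover have "Lp_norm p (\<lambda>x. f n x - g x) \<le> e k"
        by (rule lp_le[OF False p e0]) (use I in \<open>simp add: P_def\<close>)
      ultimately show ?thesis using L False by (simp add: XSp_fin P_def)
    qed
  qed
  have "g \<in> XSp p"
  proof -
    have "(\<lambda>x. f (N 0) x - (f (N 0) x - g x)) \<in> XSp p"
      by (rule XSp_diff[OF p f[of "N 0"] conjunct1[OF main[of 0 "N 0", OF le_refl]]])
    then show ?thesis by simp
  qed
  then show ?thesis using main by blast
qed




definition famS :: "(ennreal \<Rightarrow> real \<Rightarrow> real) \<Rightarrow> bool" where
  "famS F \<longleftrightarrow> (\<forall>q. F q \<in> XSp (max q 1)) \<and> bdd_above (range (\<lambda>q. Xnorm (max q 1) (F q)))"

definition famR :: "(ennreal \<Rightarrow> real \<Rightarrow> real) \<Rightarrow> (ennreal \<Rightarrow> real \<Rightarrow> real) \<Rightarrow> bool" where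
  "famR F G \<longleftrightarrow> famS F \<and> famS G \<and> (\<forall>q. AE x in lborel. F q x = G q x)"

lemma q1: "1 \<le> max q (1::ennreal)" by simp

lemma famS_I:
  assumes "\<And>q. F q \<in> XSp (max q 1)" "\<And>q. Xnorm (max q 1) (F q) \<le> B"
  shows "famS F"
  using assms unfolding famS_def by (auto intro!: bdd_aboveI[of _ B])

lemma famS_bound:
  assumes "famS F" obtains B where "\<And>q. Xnorm (max q 1) (F q) \<le> B"
  using assms unfolding famS_def bdd_above_def by auto

lemma famS_X: "famS F \<Longrightarrow> F q \<in> XSp (max q 1)"
  by (simp add: famS_def)

lemma famS_zero: "famS (\<lambda>q x. 0)"
  by (rule famS_I[of _ 0]) (auto simp: XSp_zero Xnorm_zero)

lemma famR_part: "part_equivp famR"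
proof (rule part_equivpI)
  show "\<exists>x. famR x x" using famS_zero by (auto simp: famR_def)
  show "symp famR" unfolding symp_def famR_def
  proof (intro allI impI, elim conjE, intro conjI allI)
    fix F G :: "ennreal \<Rightarrow> real \<Rightarrow> real" and q
    assume "\<forall>q. AE x in lborel. F q x = G q x"
    then have "AE x in lborel. F q x = G q x" by blast
    then show "AE x in lborel. G q x = F q x" by eventually_elim simp
  qed
  show "transp famR" unfolding transp_def famR_def
  proof (intro allI impI, elim conjE, intro conjI allI)
    fix F G H :: "ennreal \<Rightarrow> real \<Rightarrow> real" and q
    assume "\<forall>q. AE x in lborel. F q x = G q x" "\<forall>q. AE x in lborel. G q x = H q x"
    then have "AE x in lborel. F q x = G q x" "AE x in lborel. G q x = H q x" by blast+
    then show "AE x in lborel. F q x = H q x" by eventually_elim simp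
  qed
qed

quotient_type xf = "ennreal \<Rightarrow> real \<Rightarrow> real" / partial: famR
  by (rule famR_part)

lemma famS_add: "famS F \<Longrightarrow> famS G \<Longrightarrow> famS (\<lambda>q x. F q x + G q x)"
proof -
  assume F: "famS F" and G: "famS G"
  obtain B1 where B1: "\<And>q. Xnorm (max q 1) (F q) \<le> B1" using famS_bound[OF F] by blast
  obtain B2 where B2: "\<And>q. Xnorm (max q 1) (G q) \<le> B2" using famS_bound[OF G] by blast
  show ?thesis
  proof (rule famS_I[of _ "B1 + B2"])
    fix q
    show "(\<lambda>x. F q x + G q x) \<in> XSp (max q 1)" by (rule XSp_add(1)[OF q1 famS_X[OF F] famS_X[OF G]])
    have "Xnorm (max q 1) (\<lambda>x. F q x + G q x) \<le> Xnorm (max q 1) (F q) + Xnorm (max q 1) (G q)"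
      by (rule Xnorm_add[OF q1 famS_X[OF F] famS_X[OF G]])
    then show "Xnorm (max q 1) (\<lambda>x. F q x + G q x) \<le> B1 + B2" using B1[of q] B2[of q] by linarith
  qed
qed

lemma famS_scale: "famS F \<Longrightarrow> famS (\<lambda>q x. c * F q x)"
proof -
  assume F: "famS F"
  obtain B1 where B1: "\<And>q. Xnorm (max q 1) (F q) \<le> B1" using famS_bound[OF F] by blast
  show ?thesis
  proof (rule famS_I[of _ "\<bar>c\<bar> * B1"])
    fix q
    show "(\<lambda>x. c * F q x) \<in> XSp (max q 1)" by (rule XSp_scale(1)[OF q1 famS_X[OF F]])
    show "Xnorm (max q 1) (\<lambda>x. c * F q x) \<le> \<bar>c\<bar> * B1"
      using Xnorm_scale[OF q1 famS_X[OF F]] B1[of q] by (simp add: mult_left_mono)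
  qed
qed

lemma famS_uminus: "famS F \<Longrightarrow> famS (\<lambda>q x. - F q x)"
  using famS_scale[of F "-1"] by simp

lemma famS_diff: "famS F \<Longrightarrow> famS G \<Longrightarrow> famS (\<lambda>q x. F q x - G q x)"
  using famS_add[OF _ famS_uminus] by simp

lemma famR_I: "famS F \<Longrightarrow> (\<And>q x. G q x = F q x) \<Longrightarrow> famR F G"
proof -
  assume "famS F" "\<And>q x. G q x = F q x"
  moreover then have "G = F" by auto
  ultimately show ?thesis by (auto simp: famR_def)
qed

lemma AE_comb2:
  assumes "\<forall>q. AE x in lborel. A q x = A' q x" "\<forall>q. AE x in lborel. B q x = B' q x"
  shows "AE x in lborel. h (A q x) (B q x) = h (A' q x) (B' q x)"
proof -
  have "AE x in lborel. A q x = A' q x" "AE x in lborel. B q x = B' q x" using assms by blast+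
  then show ?thesis by eventually_elim simp
qed

lemma AE_comb1:
  assumes "\<forall>q. AE x in lborel. A q x = A' q x"
  shows "AE x in lborel. h (A q x) = h (A' q x)"
proof -
  have "AE x in lborel. A q x = A' q x" using assms by blast
  then show ?thesis by eventually_elim simp
qed

definition famN :: "(ennreal \<Rightarrow> real \<Rightarrow> real) \<Rightarrow> real" where
  "famN F = (SUP q. Xnorm (max q 1) (F q))"

lemma famN_ge: "famS F \<Longrightarrow> Xnorm (max q 1) (F q) \<le> famN F"
  unfolding famN_def famS_def by (intro cSUP_upper) auto

lemma famN_le: "(\<And>q. Xnorm (max q 1) (F q) \<le> B) \<Longrightarrow> famN F \<le> B"
  unfolding famN_def by (intro cSUP_least) auto

lemma famN_nonneg: "famS F \<Longrightarrow> 0 \<le> famN F"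
  using famN_ge[of F 0] Xnorm_nonneg[of "max 0 1" "F 0"] by linarith

lemma famN_cong: "famR F G \<Longrightarrow> famN F = famN G"
  unfolding famN_def famR_def
  by (intro SUP_cong refl Xnorm_cong) (auto simp: famS_def XSp_def)

instantiation xf :: real_normed_vector
begin

lift_definition zero_xf :: xf is "\<lambda>q x. 0" by (simp add: famR_def famS_zero)

lift_definition plus_xf :: "xf \<Rightarrow> xf \<Rightarrow> xf" is "\<lambda>F G q x. F q x + G q x"
  unfolding famR_def by (auto intro!: famS_add AE_comb2[where h="(+)"])

lift_definition uminus_xf :: "xf \<Rightarrow> xf" is "\<lambda>F q x. - F q x"
  unfolding famR_def by (auto intro!: famS_uminus AE_comb1[where h=uminus])

lift_definition minus_xf :: "xf \<Rightarrow> xf \<Rightarrow> xf" is "\<lambda>F G q x. F q x - G q x"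
  unfolding famR_def by (auto intro!: famS_diff AE_comb2[where h="(-)"])

lift_definition scaleR_xf :: "real \<Rightarrow> xf \<Rightarrow> xf" is "\<lambda>c F q x. c * F q x"
  unfolding famR_def by (auto intro!: famS_scale AE_comb1[where h="\<lambda>y. c * y" for c])

lift_definition norm_xf :: "xf \<Rightarrow> real" is famN
  by (rule famN_cong)

definition dist_xf :: "xf \<Rightarrow> xf \<Rightarrow> real" where "dist_xf x y = norm (x - y)"
definition sgn_xf :: "xf \<Rightarrow> xf" where "sgn_xf x = scaleR (inverse (norm x)) x"
definition uniformity_xf :: "(xf \<times> xf) filter" where
  "uniformity_xf = (INF e\<in>{0<..}. principal {(x, y). dist x y < e})"
definition open_xf :: "xf set \<Rightarrow> bool" where
  "open_xf U = (\<forall>x\<in>U. eventually (\<lambda>(x', y). x' = x \<longrightarrow> y \<in> U) uniformity)"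

instance
proof
  have R: "famR F F \<longleftrightarrow> famS F" for F by (auto simp: famR_def)
  have Q: "Quotient3 famR abs_xf rep_xf" by (rule Quotient3_xf)
  have cases: "\<exists>F. famS F \<and> X = abs_xf F" for X :: xf
    using Quotient3_abs_rep[OF Q, of X] Quotient3_rep_reflp[OF Q, of X] R by metis
  have eq: "abs_xf F = abs_xf G" if "famS F" "(\<And>q x. G q x = F q x)" for F G
  proof -
    have "G = F" using that(2) by auto
    then show ?thesis by simp
  qed
  note simps = R famS_add famS_scale famS_uminus famS_diff famS_zero
    plus_xf.abs_eq scaleR_xf.abs_eq uminus_xf.abs_eq minus_xf.abs_eq zero_xf.abs_eq norm_xf.abs_eq
  fix a b c :: xf and r s :: real
  obtain A where A: "famS A" "a = abs_xf A" using cases by blast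
  obtain B where B: "famS B" "b = abs_xf B" using cases by blast
  obtain C where C: "famS C" "c = abs_xf C" using cases by blast
  show "a + b + c = a + (b + c)" using A B C by (simp add: simps add.assoc)
  show "a + b = b + a" using A B by (simp add: simps add.commute)
  show "0 + a = a" using A by (simp add: simps)
  show "- a + a = 0" using A by (simp add: simps)
  show "a - b = a + - b" using A B by (simp add: simps)
  show "r *\<^sub>R (a + b) = r *\<^sub>R a + r *\<^sub>R b" using A B by (simp add: simps algebra_simps)
  show "(r + s) *\<^sub>R a = r *\<^sub>R a + s *\<^sub>R a" using A by (simp add: simps algebra_simps)
  show "r *\<^sub>R s *\<^sub>R a = (r * s) *\<^sub>R a" using A by (simp add: simps algebra_simps)
  show "1 *\<^sub>R a = a" using A by (simp add: simps)
  show "dist a b = norm (a - b)" by (simp add: dist_xf_def)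
  show "sgn a = inverse (norm a) *\<^sub>R a" by (simp add: sgn_xf_def)
  show "(uniformity :: (xf \<times> xf) filter) = (INF e\<in>{0<..}. principal {(x, y). dist x y < e})"
    by (simp add: uniformity_xf_def)
  show "open U = (\<forall>x\<in>U. eventually (\<lambda>(x', y). x' = x \<longrightarrow> y \<in> U) uniformity)" for U :: "xf set"
    by (simp add: open_xf_def)
  show "norm a = 0 \<longleftrightarrow> a = 0"
  proof -
    have "famN A = 0 \<longleftrightarrow> (\<forall>q. AE x in lborel. A q x = 0)"
    proof
      assume N: "famN A = 0"
      show "\<forall>q. AE x in lborel. A q x = 0"
      proof
        fix q
        have "Xnorm (max q 1) (A q) = 0"
          using famN_ge[OF A(1), of q] N Xnorm_nonneg[of "max q 1" "A q"] by linarith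
        then show "AE x in lborel. A q x = 0" using Xnorm_eq0 famS_X[OF A(1)] by blast
      qed
    next
      assume Z: "\<forall>q. AE x in lborel. A q x = 0"
      have "Xnorm (max q 1) (A q) = 0" for q
      proof -
        have "Xnorm (max q 1) (A q) = Xnorm (max q 1) (\<lambda>x. 0)"
          using Z famS_X[OF A(1), of q] by (intro Xnorm_cong) (auto simp: XSp_def)
        then show ?thesis by (simp add: Xnorm_zero)
      qed
      then have "famN A \<le> 0" by (intro famN_le) simp
      then show "famN A = 0" using famN_nonneg[OF A(1)] by linarith
    qed
    moreover have "a = 0 \<longleftrightarrow> (\<forall>q. AE x in lborel. A q x = 0)"
      using A Quotient3_rel[OF Q, of A "\<lambda>q x. 0"] famS_zero
      by (simp add: zero_xf.abs_eq R famR_def)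
    ultimately show ?thesis using A by (simp add: simps)
  qed
  show "norm (a + b) \<le> norm a + norm b"
  proof -
    have "famN (\<lambda>q x. A q x + B q x) \<le> famN A + famN B"
    proof (rule famN_le)
      fix q
      have "Xnorm (max q 1) (\<lambda>x. A q x + B q x) \<le> Xnorm (max q 1) (A q) + Xnorm (max q 1) (B q)"
        by (rule Xnorm_add[OF q1 famS_X[OF A(1)] famS_X[OF B(1)]])
      then show "Xnorm (max q 1) (\<lambda>x. A q x + B q x) \<le> famN A + famN B"
        using famN_ge[OF A(1), of q] famN_ge[OF B(1), of q] by linarith
    qed
    then show ?thesis using A B by (simp add: simps)
  qed
  show "norm (r *\<^sub>R a) = \<bar>r\<bar> * norm a"
  proof -
    have le: "famN (\<lambda>q x. c * F q x) \<le> \<bar>c\<bar> * famN F" if F: "famS F" for F c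
    proof (rule famN_le)
      fix q
      show "Xnorm (max q 1) (\<lambda>x. c * F q x) \<le> \<bar>c\<bar> * famN F"
        using Xnorm_scale[OF q1 famS_X[OF F], where c=c] famN_ge[OF F, of q] by (simp add: mult_left_mono)
    qed
    have "famN (\<lambda>q x. r * A q x) = \<bar>r\<bar> * famN A"
    proof (cases "r = 0")
      case True
      then show ?thesis using le[OF A(1), of 0] famN_nonneg[OF famS_scale[OF A(1), of 0]] by simp
    next
      case False
      have "famN A = famN (\<lambda>q x. (1/r) * (r * A q x))" using False by simp
      also have "\<dots> \<le> \<bar>1/r\<bar> * famN (\<lambda>q x. r * A q x)" by (rule le[OF famS_scale[OF A(1)]])
      finally have "\<bar>r\<bar> * famN A \<le> famN (\<lambda>q x. r * A q x)" using False by (simp add: field_simps)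
      then show ?thesis using le[OF A(1), of r] by linarith
    qed
    then show ?thesis using A by (simp add: simps)
  qed
qed

end


lemma xf_Q: "Quotient3 famR abs_xf rep_xf" by (rule Quotient3_xf)

lemma famRR: "famR F F \<longleftrightarrow> famS F" by (auto simp: famR_def)

lemma famS_rep: "famS (rep_xf X)"
  using Quotient3_rep_reflp[OF xf_Q, of X] by (simp add: famRR)

lemma abs_rep[simp]: "abs_xf (rep_xf X) = X"
  by (rule Quotient3_abs_rep[OF xf_Q])

lemma abs_eq_iff: "famS F \<Longrightarrow> famS G \<Longrightarrow> abs_xf F = abs_xf G \<longleftrightarrow> (\<forall>q. AE x in lborel. F q x = G q x)"
  using Quotient3_rel[OF xf_Q, of F G] by (auto simp: famR_def)

lemma xf_norm_abs: "famS F \<Longrightarrow> norm (abs_xf F) = famN F"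
  by (simp add: norm_xf.abs_eq famRR)

lemma xf_minus_abs: "famS F \<Longrightarrow> famS G \<Longrightarrow> abs_xf F - abs_xf G = abs_xf (\<lambda>q x. F q x - G q x)"
  by (simp add: minus_xf.abs_eq famRR)

lemma xf_plus_abs: "famS F \<Longrightarrow> famS G \<Longrightarrow> abs_xf F + abs_xf G = abs_xf (\<lambda>q x. F q x + G q x)"
  by (simp add: plus_xf.abs_eq famRR)

lemma xf_scale_abs: "famS F \<Longrightarrow> c *\<^sub>R abs_xf F = abs_xf (\<lambda>q x. c * F q x)"
  by (simp add: scaleR_xf.abs_eq famRR)

lemma xf_zero_abs: "0 = abs_xf (\<lambda>q x. 0)"
  by (simp add: zero_xf.abs_eq)

instance xf :: banach
proof
  fix X :: "nat \<Rightarrow> xf" assume C: "Cauchy X"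
  define F where "F n = rep_xf (X n)" for n
  have FS: "famS (F n)" for n by (simp add: F_def famS_rep)
  have XF: "X n = abs_xf (F n)" for n by (simp add: F_def)
  define e :: "nat \<Rightarrow> real" where "e k = 1 / (Suc k)" for k
  have epos: "e k > 0" for k by (simp add: e_def)
  have "\<exists>N. \<forall>m\<ge>N. \<forall>n\<ge>N. dist (X m) (X n) < e k" for k
    using metric_CauchyD[OF C epos] by blast
  then obtain N where N: "\<And>k m n. m \<ge> N k \<Longrightarrow> n \<ge> N k \<Longrightarrow> dist (X m) (X n) < e k" by metis
  have compo: "Lp_norm (max q 1) (\<lambda>x. F n q x - F m q x) \<le> e k \<and> Linf_norm (\<lambda>x. F n q x - F m q x) \<le> e k"
    if "n \<ge> N k" "m \<ge> N k" for k n m q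
  proof -
    have "Xnorm (max q 1) (\<lambda>x. F n q x - F m q x) \<le> famN (\<lambda>q x. F n q x - F m q x)"
      by (rule famN_ge[OF famS_diff[OF FS FS]])
    also have "\<dots> = dist (X n) (X m)"
      by (simp add: dist_norm XF xf_minus_abs[OF FS FS] xf_norm_abs[OF famS_diff[OF FS FS]])
    also have "\<dots> < e k" using N that by blast
    finally show ?thesis using lp_le_Xnorm[of "max q 1" "\<lambda>x. F n q x - F m q x"]
      linf_le_Xnorm[of "\<lambda>x. F n q x - F m q x" "max q 1"] by linarith
  qed
  have ez: "\<exists>k. e k < \<epsilon>" if eps: "\<epsilon> > 0" for \<epsilon>
  proof -
    obtain k where "inverse (real (Suc k)) < \<epsilon>" using reals_Archimedean[OF eps] by blast
    then show ?thesis by (auto simp: e_def field_simps)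
  qed
  have "\<exists>g. g \<in> XSp (max q 1) \<and> (\<forall>k n. n \<ge> N k \<longrightarrow>
     Lp_norm (max q 1) (\<lambda>x. F n q x - g x) \<le> e k \<and> Linf_norm (\<lambda>x. F n q x - g x) \<le> e k)" for q
    using XSp_complete_core[where p="max q 1" and f="\<lambda>n. F n q" and N=N and e=e, OF q1 famS_X[OF FS] compo ez] by blast
  then obtain G where G: "\<And>q. G q \<in> XSp (max q 1)"
    and GB: "\<And>q k n. n \<ge> N k \<Longrightarrow>
     Lp_norm (max q 1) (\<lambda>x. F n q x - G q x) \<le> e k \<and> Linf_norm (\<lambda>x. F n q x - G q x) \<le> e k"
    by metis
  have GX: "Xnorm (max q 1) (\<lambda>x. F n q x - G q x) \<le> 2 * e k" if "n \<ge> N k" for q n k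
    using GB[OF that, of q] by (simp add: Xnorm_def)
  have GS: "famS G"
  proof (rule famS_I[OF G])
    fix q
    have "Xnorm (max q 1) (\<lambda>x. F (N 0) q x + (G q x - F (N 0) q x))
       \<le> Xnorm (max q 1) (F (N 0) q) + Xnorm (max q 1) (\<lambda>x. G q x - F (N 0) q x)"
      by (rule Xnorm_add[OF q1 famS_X[OF FS] XSp_diff[OF q1 G famS_X[OF FS]]])
    also have "Xnorm (max q 1) (\<lambda>x. G q x - F (N 0) q x) = Xnorm (max q 1) (\<lambda>x. F (N 0) q x - G q x)"
      by (rule Xnorm_commute[OF q1 G famS_X[OF FS]])
    finally show "Xnorm (max q 1) (G q) \<le> famN (F (N 0)) + 2 * e 0"
      using GX[where q=q and n="N 0" and k=0] famN_ge[OF FS[of "N 0"], of q] by simp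
  qed
  have "X \<longlonglongrightarrow> abs_xf G"
  proof (rule metric_LIMSEQ_I)
    fix \<epsilon> :: real assume "\<epsilon> > 0"
    then obtain k where k: "e k < \<epsilon> / 2" using ez[of "\<epsilon>/2"] by auto
    show "\<exists>M. \<forall>n\<ge>M. dist (X n) (abs_xf G) < \<epsilon>"
    proof (intro exI allI impI)
      fix n assume n: "n \<ge> N k"
      have "dist (X n) (abs_xf G) = famN (\<lambda>q x. F n q x - G q x)"
        by (simp add: dist_norm XF xf_minus_abs[OF FS GS] xf_norm_abs[OF famS_diff[OF FS GS]])
      also have "\<dots> \<le> 2 * e k" by (rule famN_le[OF GX[OF n]])
      finally show "dist (X n) (abs_xf G) < \<epsilon>" using k by linarith
    qed
  qed
  then show "convergent X" by (auto simp: convergent_def)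
qed




definition solw :: "('a::real_normed_vector \<Rightarrow> 'a) \<Rightarrow> real \<Rightarrow> 'a \<Rightarrow> (real \<Rightarrow> 'a) \<Rightarrow> bool" where
  "solw G T z0 z \<longleftrightarrow> z 0 = z0 \<and> (\<exists>d. (\<forall>t\<in>{0..T}. (z has_vector_derivative d t) (at t within {0..T}))
      \<and> (\<forall>t\<in>{0<..T}. d t = G (z t)))"

lemma solw_cont: "solw G T z0 z \<Longrightarrow> continuous_on {0..T} z"
proof -
  assume "solw G T z0 z"
  then obtain d where "\<forall>t\<in>{0..T}. (z has_vector_derivative d t) (at t within {0..T})"
    unfolding solw_def by blast
  then show ?thesis by (intro continuous_on_vector_derivative) auto
qed

lemma solw_int:
  fixes z :: "real \<Rightarrow> 'a::banach"
  assumes "solw G T z0 z" "0 \<le> t" "t \<le> T"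
  shows "((\<lambda>s. G (z s)) has_integral (z t - z0)) {0..t}"
proof -
  obtain d where z0: "z 0 = z0" and d: "\<And>s. s \<in> {0..T} \<Longrightarrow> (z has_vector_derivative d s) (at s within {0..T})"
    and dG: "\<And>s. s \<in> {0<..T} \<Longrightarrow> d s = G (z s)"
    using assms(1) unfolding solw_def by blast
  have "(d has_integral (z t - z 0)) {0..t}"
  proof (rule fundamental_theorem_of_calculus[OF assms(2)])
    fix s assume "s \<in> {0..t}"
    then show "(z has_vector_derivative d s) (at s within {0..t})"
      using assms(3) by (intro has_vector_derivative_within_subset[OF d]) auto
  qed
  from has_integral_spike_finite[where S="{0}" and g="\<lambda>s. G (z s)" and f=d, OF _ _ this]
  show ?thesis using dG assms(3) z0 by auto
qed

lemma solw_apriori: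
  fixes z :: "real \<Rightarrow> 'a::banach"
  assumes sol: "solw G T z0 z" and M: "0 \<le> M" and GM: "\<And>x. norm x \<le> R \<Longrightarrow> norm (G x) \<le> M"
    and small: "norm z0 + T * M < R"
  shows "\<forall>t\<in>{0..T}. norm (z t) < R"
proof (rule ccontr)
  assume "\<not> ?thesis"
  then obtain t where t: "0 \<le> t" "t \<le> T" "norm (z t) \<ge> R" by (auto simp: not_less)
  have cz: "continuous_on {0..T} (\<lambda>s. norm (z s))"
    by (intro continuous_on_norm solw_cont[OF sol])
  have z00: "z 0 = z0" using sol by (simp add: solw_def)
  have n0: "norm (z 0) < R" using z00 small M t by (smt (verit) mult_nonneg_nonneg)
  define A where "A = {s \<in> {0..t}. norm (z s) = R}"
  have cA: "continuous_on {0..t} (\<lambda>s. norm (z s))" by (rule continuous_on_subset[OF cz]) (use t in auto)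
  have "\<exists>s. 0 \<le> s \<and> s \<le> t \<and> norm (z s) = R"
    by (rule IVT'[OF _ _ t(1) cA]) (use n0 t in auto)
  then have Ane: "A \<noteq> {}" by (auto simp: A_def)
  have "closed A" unfolding A_def by (rule continuous_closed_preimage_constant[OF cA]) simp
  moreover have "bounded A" by (rule bounded_subset[of "{0..t}"]) (auto simp: A_def)
  ultimately have "compact A" by (simp add: compact_eq_bounded_closed)
  then obtain s1 where s1: "s1 \<in> A" "\<And>s. s \<in> A \<Longrightarrow> s1 \<le> s"
    using continuous_attains_inf[OF _ Ane, of "\<lambda>x. x"] by auto
  have s1t: "0 \<le> s1" "s1 \<le> t" "norm (z s1) = R" using s1 by (auto simp: A_def)
  have below: "norm (z s) \<le> R" if s0: "0 \<le> s" "s \<le> s1" for s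
  proof (rule ccontr)
    assume "\<not> norm (z s) \<le> R"
    then have gt: "norm (z s) > R" by simp
    have cs: "continuous_on {0..s} (\<lambda>s. norm (z s))" by (rule continuous_on_subset[OF cz]) (use s0 s1t t in auto)
    obtain s' where "0 \<le> s'" "s' \<le> s" "norm (z s') = R"
      using IVT'[OF _ _ s0(1) cs, of R] n0 gt by auto
    then have "s' \<in> A" using s0 s1t by (auto simp: A_def)
    then have "s1 \<le> s'" by (rule s1(2))
    then have "s = s1" using \<open>s' \<le> s\<close> s0 by auto
    then show False using gt s1t by simp
  qed
  have I: "((\<lambda>s. G (z s)) has_integral (z s1 - z0)) {0..s1}"
    by (rule solw_int[OF sol s1t(1)]) (use s1t t in auto)
  have B: "\<And>x. x \<in> {0..s1} - {} \<Longrightarrow> norm (G (z x)) \<le> M" using below GM by auto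
  have "norm (z s1 - z0) \<le> M * s1"
    using has_integral_bound_real[OF M finite.emptyI I B] s1t by simp
  then have "norm (z s1 - z0) \<le> M * T" using s1t t M by (smt (verit) mult_left_mono)
  then have "norm (z s1) \<le> norm z0 + T * M" using norm_triangle_ineq2[of "z s1" z0] by (simp add: mult.commute)
  then show False using s1t small by simp
qed

lemma solw_est:
  fixes z y :: "real \<Rightarrow> 'a::banach"
  assumes sz: "solw G T z0 z" and sy: "solw G T y0 y" and T: "0 \<le> T"
    and R: "\<And>t. t \<in> {0..T} \<Longrightarrow> norm (z t) \<le> R \<and> norm (y t) \<le> R"
    and L: "L-lipschitz_on (cball 0 R) G" and TL: "T * L \<le> 1/2"
  shows "\<forall>t\<in>{0..T}. norm (z t - y t) \<le> 2 * norm (z0 - y0)"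
proof -
  have L0: "0 \<le> L" using L by (simp add: lipschitz_on_def)
  have c: "continuous_on {0..T} (\<lambda>t. norm (z t - y t))"
    by (intro continuous_intros solw_cont[OF sz] solw_cont[OF sy])
  obtain tm where tm: "tm \<in> {0..T}" "\<And>t. t \<in> {0..T} \<Longrightarrow> norm (z t - y t) \<le> norm (z tm - y tm)"
    using continuous_attains_sup[OF compact_Icc _ c] T by auto
  define D where "D = norm (z tm - y tm)"
  have I: "((\<lambda>s. G (z s) - G (y s)) has_integral ((z tm - z0) - (y tm - y0))) {0..tm}"
    using solw_int[OF sz, of tm] solw_int[OF sy, of tm] tm by (intro has_integral_diff) auto
  have B: "norm (G (z s) - G (y s)) \<le> L * D" if s: "s \<in> {0..tm} - {}" for s
  proof -
    have sT: "s \<in> {0..T}" using s tm by auto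
    have "norm (G (z s) - G (y s)) \<le> L * norm (z s - y s)"
      using lipschitz_onD[OF L, of "z s" "y s"] R[OF sT] by (simp add: dist_norm)
    also have "\<dots> \<le> L * D" using tm(2)[OF sT] L0 by (simp add: D_def mult_left_mono)
    finally show "norm (G (z s) - G (y s)) \<le> L * D" .
  qed
  have LD: "0 \<le> L * D" using L0 by (simp add: D_def)
  have "norm ((z tm - z0) - (y tm - y0)) \<le> (L * D) * tm"
    using has_integral_bound_real[OF LD finite.emptyI I B] tm by simp
  also have "\<dots> \<le> (L * D) * T" using tm L0 by (intro mult_left_mono) (auto simp: D_def)
  also have "\<dots> \<le> D / 2"
  proof -
    have "0 \<le> D" by (simp add: D_def)
    then have "(L * D) * T = (T * L) * D" by (simp add: algebra_simps)
    also have "\<dots> \<le> (1/2) * D" using TL \<open>0 \<le> D\<close> by (intro mult_right_mono) auto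
    finally show ?thesis by simp
  qed
  finally have h: "norm ((z tm - z0) - (y tm - y0)) \<le> D / 2" .
  have "D = norm ((z0 - y0) + ((z tm - z0) - (y tm - y0)))" unfolding D_def by (simp add: algebra_simps)
  also have "\<dots> \<le> norm (z0 - y0) + norm ((z tm - z0) - (y tm - y0))" by (rule norm_triangle_ineq)
  finally have "D \<le> norm (z0 - y0) + D / 2" using h by linarith
  then have "D \<le> 2 * norm (z0 - y0)" by simp
  then show ?thesis using tm(2) unfolding D_def by (meson order_trans)
qed


lemma solw_exists:
  fixes G :: "'a::banach \<Rightarrow> 'a"
  assumes L: "L-lipschitz_on (cball 0 R) G" and z0R: "norm z0 + 1 \<le> R"
    and GM: "\<And>x. norm x \<le> R \<Longrightarrow> norm (G x) \<le> M" and M: "0 \<le> M"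
    and T: "0 < T" and TL: "T * L \<le> 1/2" and TM: "T * M \<le> 1/2"
  shows "\<exists>z. solw G T z0 z \<and> (\<forall>t\<in>{0..T}. (z has_vector_derivative G (z t)) (at t within {0..T}))"
proof -
  have L0: "0 \<le> L" using L by (simp add: lipschitz_on_def)
  define S :: "(real \<Rightarrow>\<^sub>C 'a) set" where "S = PiC UNIV (\<lambda>_. cball z0 1)"
  have inS: "f \<in> S \<longleftrightarrow> (\<forall>t. dist z0 (apply_bcontfun f t) \<le> 1)" for f
    by (auto simp: S_def mem_PiC_iff)
  have Sc: "complete S" unfolding S_def complete_eq_closed by (rule closed_PiC) simp
  have Sne: "S \<noteq> {}" using inS[of "const_bcontfun z0"] by auto
  have fR: "norm (apply_bcontfun f t) \<le> R" if "f \<in> S" for f t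
  proof -
    have "norm (apply_bcontfun f t) \<le> norm z0 + dist z0 (apply_bcontfun f t)"
      using norm_triangle_ineq2[of "apply_bcontfun f t" z0] by (simp add: dist_norm norm_minus_commute)
    then show ?thesis using inS that z0R by (smt (verit))
  qed
  have contG: "continuous_on {0..T} (\<lambda>s. G (apply_bcontfun f s))" if "f \<in> S" for f
  proof (rule continuous_on_compose2[OF lipschitz_on_continuous_on[OF L]])
    show "continuous_on {0..T} (apply_bcontfun f)" by simp
    show "apply_bcontfun f ` {0..T} \<subseteq> cball 0 R" using fR[OF that] by auto
  qed
  have intG: "(\<lambda>s. G (apply_bcontfun f s)) integrable_on {0..c}" if "f \<in> S" "0 \<le> c" "c \<le> T" for f c
    by (rule integrable_on_subinterval[OF integrable_continuous_real[OF contG[OF that(1)]]]) (use that in auto)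
  have bnd: "norm (integral {0..c} (\<lambda>s. G (apply_bcontfun f s))) \<le> M * c" if "f \<in> S" "0 \<le> c" "c \<le> T" for f c
  proof -
    have B: "\<And>x. x \<in> {0..c} - {} \<Longrightarrow> norm (G (apply_bcontfun f x)) \<le> M" using GM fR[OF that(1)] by auto
    show ?thesis using has_integral_bound_real[OF M finite.emptyI integrable_integral[OF intG[OF that]] B] that by simp
  qed
  define cl where "cl t = max 0 (min T t)" for t
  have cl: "0 \<le> cl t" "cl t \<le> T" for t using T by (auto simp: cl_def)
  have clc: "continuous_on UNIV cl" unfolding cl_def by (intro continuous_intros)
  define h where "h f t = z0 + integral {0..cl t} (\<lambda>s. G (apply_bcontfun f s))" for f t
  have hB: "h f \<in> bcontfun" if f: "f \<in> S" for f
  proof (rule bcontfun_normI)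
    have "continuous_on UNIV (\<lambda>t. integral {0..cl t} (\<lambda>s. G (apply_bcontfun f s)))"
      by (rule continuous_on_compose2[OF indefinite_integral_continuous_1[OF intG[OF f less_imp_le[OF T] order.refl]] clc])
         (use cl in auto)
    then show "continuous_on UNIV (h f)" unfolding h_def by (intro continuous_intros)
    fix t show "norm (h f t) \<le> norm z0 + M * T"
      unfolding h_def using bnd[OF f cl(1) cl(2), of t] M cl[of t]
      by (smt (verit, ccfv_SIG) mult_left_mono norm_triangle_ineq)
  qed
  define \<Phi> where "\<Phi> f = Bcontfun (h f)" for f
  have \<Phi>a: "apply_bcontfun (\<Phi> f) = h f" if "f \<in> S" for f
    using hB[OF that] by (simp add: \<Phi>_def Bcontfun_inverse)
  have \<Phi>S: "\<Phi> ` S \<subseteq> S"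
  proof
    fix g assume "g \<in> \<Phi> ` S"
    then obtain f where f: "f \<in> S" "g = \<Phi> f" by auto
    have "dist z0 (h f t) \<le> 1" for t
    proof -
      have "dist z0 (h f t) = norm (integral {0..cl t} (\<lambda>s. G (apply_bcontfun f s)))"
        by (simp add: h_def dist_norm)
      also have "\<dots> \<le> M * cl t" by (rule bnd[OF f(1) cl])
      also have "\<dots> \<le> M * T" using M cl by (intro mult_left_mono) auto
      finally show ?thesis using TM by (simp add: mult.commute)
    qed
    then show "g \<in> S" using f \<Phi>a inS by auto
  qed
  have contr: "dist (\<Phi> f) (\<Phi> g) \<le> (1/2) * dist f g" if f: "f \<in> S" and g: "g \<in> S" for f g
  proof (rule dist_bound)
    fix t
    define c where "c = cl t"
    have c: "0 \<le> c" "c \<le> T" using cl by (auto simp: c_def)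
    have "dist (apply_bcontfun (\<Phi> f) t) (apply_bcontfun (\<Phi> g) t)
        = norm (integral {0..c} (\<lambda>s. G (apply_bcontfun f s)) - integral {0..c} (\<lambda>s. G (apply_bcontfun g s)))"
      by (simp add: \<Phi>a f g h_def dist_norm c_def)
    also have "\<dots> = norm (integral {0..c} (\<lambda>s. G (apply_bcontfun f s) - G (apply_bcontfun g s)))"
      by (simp add: integral_diff intG[OF f c] intG[OF g c])
    also have "\<dots> \<le> (L * dist f g) * c"
    proof -
      have LD: "0 \<le> L * dist f g" using L0 by simp
      have B: "\<And>x. x \<in> {0..c} - {} \<Longrightarrow> norm (G (apply_bcontfun f x) - G (apply_bcontfun g x)) \<le> L * dist f g"
      proof -
        fix x
        have "norm (G (apply_bcontfun f x) - G (apply_bcontfun g x)) \<le> L * dist (apply_bcontfun f x) (apply_bcontfun g x)"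
          using lipschitz_onD[OF L, of "apply_bcontfun f x" "apply_bcontfun g x"] fR[OF f] fR[OF g]
          by (simp add: dist_norm)
        also have "\<dots> \<le> L * dist f g" using L0 dist_bounded by (intro mult_left_mono) auto
        finally show "norm (G (apply_bcontfun f x) - G (apply_bcontfun g x)) \<le> L * dist f g" .
      qed
      show ?thesis
        using has_integral_bound_real[OF LD finite.emptyI integrable_integral[OF integrable_diff[OF intG[OF f c] intG[OF g c]]] B] c
        by simp
    qed
    also have "\<dots> \<le> (L * dist f g) * T" using L0 c by (intro mult_left_mono) auto
    also have "\<dots> = (T * L) * dist f g" by (simp add: algebra_simps)
    also have "\<dots> \<le> (1/2) * dist f g" using TL by (intro mult_right_mono) auto
    finally show "dist (apply_bcontfun (\<Phi> f) t) (apply_bcontfun (\<Phi> g) t) \<le> (1/2) * dist f g" .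
  qed
  obtain f where f: "f \<in> S" "\<Phi> f = f"
    using Banach_fix[OF Sc Sne _ _ \<Phi>S contr] by auto
  define z where "z = apply_bcontfun f"
  have zeq: "z t = z0 + integral {0..t} (\<lambda>s. G (z s))" if "t \<in> {0..T}" for t
  proof -
    have "z t = h f t" using \<Phi>a[OF f(1)] f(2) by (simp add: z_def)
    also have "cl t = t" using that by (auto simp: cl_def)
    then have "h f t = z0 + integral {0..t} (\<lambda>s. G (z s))" by (simp add: h_def z_def)
    finally show ?thesis .
  qed
  have der: "(z has_vector_derivative G (z t)) (at t within {0..T})" if t: "t \<in> {0..T}" for t
  proof (rule has_vector_derivative_transform[OF t zeq])
    show "((\<lambda>t. z0 + integral {0..t} (\<lambda>s. G (z s))) has_vector_derivative G (z t)) (at t within {0..T})"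
      using integral_has_vector_derivative[OF contG[OF f(1)] t]
      by (auto simp: z_def intro!: derivative_eq_intros)
  qed
  have "z 0 = z0" using zeq[of 0] T by simp
  then have "solw G T z0 z" using der unfolding solw_def by (intro conjI exI[of _ "\<lambda>t. G (z t)"]) auto
  then show ?thesis using der by blast
qed

theorem ode_local:
  fixes G :: "'a::banach \<Rightarrow> 'a"
  assumes lip: "\<And>R. \<exists>L. L-lipschitz_on (cball 0 R) G" and R0: "0 \<le> R0"
  shows "\<exists>T>0. (\<forall>z0. norm z0 \<le> R0 \<longrightarrow> (\<exists>z. solw G T z0 z \<and> (\<forall>t\<in>{0..T}. (z has_vector_derivative G (z t)) (at t within {0..T}))))
     \<and> (\<forall>z0 y0 z y. norm z0 \<le> R0 \<longrightarrow> norm y0 \<le> R0 \<longrightarrow> solw G T z0 z \<longrightarrow> solw G T y0 y \<longrightarrow>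
          (\<forall>t\<in>{0..T}. norm (z t - y t) \<le> 2 * norm (z0 - y0)))"
proof -
  define R where "R = R0 + 1"
  obtain L where L: "L-lipschitz_on (cball 0 R) G" using lip by blast
  have L0: "0 \<le> L" using L by (simp add: lipschitz_on_def)
  define M where "M = norm (G 0) + L * R"
  have R1: "0 \<le> R" using R0 by (simp add: R_def)
  have M0: "0 \<le> M" using L0 R1 by (simp add: M_def)
  have GM: "norm (G x) \<le> M" if "norm x \<le> R" for x
  proof -
    have "norm (G x - G 0) \<le> L * norm (x - 0)"
      using lipschitz_onD[OF L, of x 0] that R1 by (simp add: dist_norm)
    then have "norm (G x) \<le> norm (G 0) + L * norm x" using norm_triangle_ineq2[of "G x" "G 0"] by simp
    also have "\<dots> \<le> M" using that L0 by (simp add: M_def mult_left_mono)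
    finally show ?thesis .
  qed
  define T where "T = 1 / (2 * (L + M + 1))"
  have T: "0 < T" using L0 M0 by (simp add: T_def)
  have TL: "T * L \<le> 1/2" using L0 M0 by (simp add: T_def field_simps)
  have TM: "T * M < 1/2" using L0 M0 by (simp add: T_def field_simps)
  have ex: "\<exists>z. solw G T z0 z \<and> (\<forall>t\<in>{0..T}. (z has_vector_derivative G (z t)) (at t within {0..T}))" if "norm z0 \<le> R0" for z0
    using solw_exists[OF L _ GM M0 T TL] that TM by (simp add: R_def)
  have est: "\<forall>t\<in>{0..T}. norm (z t - y t) \<le> 2 * norm (z0 - y0)"
    if "norm z0 \<le> R0" "norm y0 \<le> R0" "solw G T z0 z" "solw G T y0 y" for z0 y0 z y
  proof (rule solw_est[OF that(3,4) _ _ L TL])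
    show "0 \<le> T" using T by simp
    fix t assume t: "t \<in> {0..T}"
    have "\<forall>t\<in>{0..T}. norm (z t) < R"
      by (rule solw_apriori[OF that(3) M0 GM]) (use that(1) TM in \<open>simp_all add: R_def\<close>)
    moreover have "\<forall>t\<in>{0..T}. norm (y t) < R"
      by (rule solw_apriori[OF that(4) M0 GM]) (use that(2) TM in \<open>simp_all add: R_def\<close>)
    ultimately show "norm (z t) \<le> R \<and> norm (y t) \<le> R" using t by (meson less_imp_le)
  qed
  show ?thesis using T ex est by blast
qed




lemma young_tangent:
  fixes P m t :: real
  assumes P: "1 \<le> P" and m: "0 \<le> m" and t: "0 \<le> t"
  shows "P * m powr (P - 1) * t \<le> t powr P + (P - 1) * m powr P"
proof (cases "P = 1")
  case True
  have "m powr 0 \<le> 1" by (simp add: powr_def)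
  then have "m powr 0 * t \<le> t" using t by (simp add: mult_left_le_one_le)
  then show ?thesis using True t by simp
next
  case False
  then have P1: "P > 1" using P by simp
  show ?thesis
  proof (cases "m = 0")
    case True then show ?thesis using P1 t by simp
  next
    case False
    then have mp: "m > 0" using m by simp
    define Q where "Q = P / (P - 1)"
    have Q: "Q > 1" "1/P + 1/Q = 1" using P1 by (auto simp: Q_def field_simps)
    have "t * m powr (P - 1) \<le> t powr P / P + (m powr (P - 1)) powr Q / Q"
      by (rule Youngs_inequality[OF P1 Q(1) Q(2) t]) simp
    also have "(m powr (P - 1)) powr Q = m powr P" using P1 by (simp add: powr_powr Q_def)
    finally have "t * m powr (P - 1) \<le> t powr P / P + m powr P / Q" .
    then have "P * (t * m powr (P - 1)) \<le> P * (t powr P / P + m powr P / Q)"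
      using P1 by (intro mult_left_mono) auto
    also have "\<dots> = t powr P + (P - 1) * m powr P" using P1 by (simp add: Q_def field_simps)
    finally show ?thesis by (simp add: algebra_simps)
  qed
qed

lemma jensen_pw:
  fixes a b :: "real \<Rightarrow> real"
  assumes P: "1 \<le> P" and a0: "\<And>y. 0 \<le> a y" and b0: "\<And>y. 0 \<le> b y"
    and am[measurable]: "a \<in> borel_measurable lborel" and bm[measurable]: "b \<in> borel_measurable lborel"
    and A: "(\<integral>\<^sup>+ y. ennreal (a y) \<partial>lborel) = ennreal A" "0 \<le> A"
    and c: "(\<integral>\<^sup>+ y. ennreal (a y * b y) \<partial>lborel) = ennreal c" "0 \<le> c"
  shows "ennreal (c powr P) \<le> ennreal (A powr (P - 1)) * (\<integral>\<^sup>+ y. ennreal (a y * b y powr P) \<partial>lborel)"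
proof (cases "c = 0")
  case True then show ?thesis by simp
next
  case False
  then have cp: "c > 0" using c by simp
  have Ap: "A > 0"
  proof (rule ccontr)
    assume "\<not> A > 0"
    then have "A = 0" using A by simp
    then have "AE y in lborel. ennreal (a y) = 0" using A by (subst nn_integral_0_iff_AE[symmetric]) auto
    moreover have "a y = 0" if "ennreal (a y) = 0" for y using that a0[of y] by (metis ennreal_eq_0_iff order_antisym)
    ultimately have "AE y in lborel. a y = 0" by (auto elim!: eventually_mono)
    then have "AE y in lborel. ennreal (a y * b y) = 0" by (auto elim!: eventually_mono)
    then have "(\<integral>\<^sup>+ y. ennreal (a y * b y) \<partial>lborel) = 0" by (subst nn_integral_0_iff_AE) auto
    then show False using c cp by simp
  qed
  define m where "m = c / A"
  have mp: "m > 0" using cp Ap by (simp add: m_def)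
  define I where "I = (\<integral>\<^sup>+ y. ennreal (a y * b y powr P) \<partial>lborel)"
  have "ennreal (P * m powr (P - 1)) * ennreal c = (\<integral>\<^sup>+ y. ennreal (a y * (P * m powr (P - 1) * b y)) \<partial>lborel)"
    using P mp by (simp add: c(1)[symmetric] nn_integral_cmult[symmetric] ennreal_mult[symmetric] a0 b0 mult.left_commute)
  also have "\<dots> \<le> (\<integral>\<^sup>+ y. ennreal (a y * b y powr P) + ennreal ((P - 1) * m powr P) * ennreal (a y) \<partial>lborel)"
  proof (rule nn_integral_mono)
    fix y
    have "a y * (P * m powr (P - 1) * b y) \<le> a y * (b y powr P + (P - 1) * m powr P)"
      by (intro mult_left_mono young_tangent P a0 b0) (use mp in auto)
    also have "\<dots> = a y * b y powr P + (P - 1) * m powr P * a y" by (simp add: algebra_simps)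
    finally show "ennreal (a y * (P * m powr (P - 1) * b y)) \<le> ennreal (a y * b y powr P) + ennreal ((P - 1) * m powr P) * ennreal (a y)"
      using P a0[of y] b0[of y] mp by (simp add: ennreal_mult[symmetric] ennreal_plus[symmetric] del: ennreal_plus)
  qed
  also have "\<dots> = I + ennreal ((P - 1) * m powr P) * ennreal A"
    by (simp add: nn_integral_add nn_integral_cmult A(1)[symmetric] I_def)
  finally have key: "ennreal (P * m powr (P - 1)) * ennreal c \<le> I + ennreal ((P - 1) * m powr P) * ennreal A" .
  have cm: "c = A * m" using Ap by (simp add: m_def)
  have eq: "P * m powr (P - 1) * c = P * A * m powr P"
    using mp by (simp add: cm powr_diff field_simps)
  have e1: "ennreal (P * m powr (P - 1)) * ennreal c = ennreal (P * A * m powr P)"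
    using P mp c(2) by (simp add: ennreal_mult[symmetric] eq)
  have e2: "ennreal ((P - 1) * m powr P) * ennreal A = ennreal ((P - 1) * A * m powr P)"
    using P mp A(2) by (simp add: ennreal_mult[symmetric] algebra_simps)
  have key2: "ennreal (P * A * m powr P) \<le> I + ennreal ((P - 1) * A * m powr P)"
    using key unfolding e1 e2 .
  show ?thesis
  proof (cases "I = top")
    case True then show ?thesis using Ap by (simp add: I_def ennreal_mult_top)
  next
    case False
    then obtain i where i: "I = ennreal i" "0 \<le> i" by (cases I) auto
    have "P * A * m powr P \<le> i + (P - 1) * A * m powr P"
      using key2 P Ap mp i by (simp add: ennreal_plus[symmetric] ennreal_le_iff del: ennreal_plus)
    then have "A * m powr P \<le> i" by (simp add: algebra_simps)
    then have "A powr (P - 1) * (A * m powr P) \<le> A powr (P - 1) * i" by (intro mult_left_mono) auto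
    moreover have "c powr P = A powr (P - 1) * (A * m powr P)"
      using Ap mp by (simp add: cm powr_mult powr_diff field_simps)
    ultimately show ?thesis using i Ap by (simp add: I_def[symmetric] ennreal_mult[symmetric])
  qed
qed


definition Anorm :: "(real \<Rightarrow> real) \<Rightarrow> real" where
  "Anorm \<alpha> = enn2real (\<integral>\<^sup>+ y. ennreal \<bar>\<alpha> y\<bar> \<partial>lborel)"

definition Hc :: "(real \<Rightarrow> real) \<Rightarrow> (real \<Rightarrow> real) \<Rightarrow> real \<Rightarrow> real" where
  "Hc \<alpha> d x = enn2real (\<integral>\<^sup>+ y. ennreal (\<bar>\<alpha> (y - x)\<bar> * \<bar>d y\<bar>) \<partial>lborel)"

lemma Anorm_nonneg: "0 \<le> Anorm \<alpha>" by (simp add: Anorm_def)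

lemma alpha_meas: fixes \<alpha> :: "real \<Rightarrow> real" shows "integrable lborel \<alpha> \<Longrightarrow> \<alpha> \<in> borel_measurable borel"
  using borel_measurable_integrable[of lborel \<alpha>] by simp

lemma alpha_fin:
  fixes \<alpha> d :: "real \<Rightarrow> real"
  assumes "integrable lborel \<alpha>"
  shows "(\<integral>\<^sup>+ y. ennreal \<bar>\<alpha> y\<bar> \<partial>lborel) = ennreal (Anorm \<alpha>)"
proof -
  have "(\<integral>\<^sup>+ y. ennreal (norm (\<alpha> y)) \<partial>lborel) < \<infinity>" using assms by (simp add: integrable_iff_bounded)
  then show ?thesis by (simp add: Anorm_def less_top)
qed

lemma alpha_shift_y:
  fixes \<alpha> d :: "real \<Rightarrow> real"
  assumes "integrable lborel \<alpha>"
  shows "(\<integral>\<^sup>+ y. ennreal \<bar>\<alpha> (y - x)\<bar> \<partial>lborel) = ennreal (Anorm \<alpha>)"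
proof -
  have [measurable]: "\<alpha> \<in> borel_measurable borel" by (rule alpha_meas[OF assms])
  show ?thesis using alpha_fin[OF assms] nn_integral_real_affine[where f="\<lambda>s. ennreal \<bar>\<alpha> s\<bar>" and c=1 and t="-x"]
    by simp
qed

lemma alpha_shift_x:
  fixes \<alpha> d :: "real \<Rightarrow> real"
  assumes "integrable lborel \<alpha>"
  shows "(\<integral>\<^sup>+ x. ennreal \<bar>\<alpha> (y - x)\<bar> \<partial>lborel) = ennreal (Anorm \<alpha>)"
proof -
  have [measurable]: "\<alpha> \<in> borel_measurable borel" by (rule alpha_meas[OF assms])
  show ?thesis using alpha_fin[OF assms] nn_integral_real_affine[where f="\<lambda>s. ennreal \<bar>\<alpha> s\<bar>" and c="-1" and t=y]
    by simp
qed

lemma pair_meas0: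
  fixes \<alpha> d :: "real \<Rightarrow> real"
  assumes [measurable]: "\<alpha> \<in> borel_measurable borel" "d \<in> borel_measurable borel"
  shows "(\<lambda>(x, y). ennreal (\<bar>\<alpha> (y - x)\<bar> * \<bar>d y\<bar> powr P)) \<in> borel_measurable (lborel \<Otimes>\<^sub>M lborel)"
  by measurable

lemma pair_meas1:
  fixes \<alpha> d :: "real \<Rightarrow> real"
  assumes [measurable]: "\<alpha> \<in> borel_measurable borel" "d \<in> borel_measurable borel"
  shows "(\<lambda>(x, y). ennreal (\<bar>\<alpha> (y - x)\<bar> * \<bar>d y\<bar>)) \<in> borel_measurable (lborel \<Otimes>\<^sub>M lborel)"
  by measurable

lemma pair_meas:
  fixes \<alpha> d :: "real \<Rightarrow> real"
  assumes "integrable lborel \<alpha>" "d \<in> borel_measurable lborel"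
  shows "(\<lambda>(x, y). ennreal (\<bar>\<alpha> (y - x)\<bar> * \<bar>d y\<bar> powr P)) \<in> borel_measurable (lborel \<Otimes>\<^sub>M lborel)"
    "(\<lambda>(x, y). ennreal (\<bar>\<alpha> (y - x)\<bar> * \<bar>d y\<bar>)) \<in> borel_measurable (lborel \<Otimes>\<^sub>M lborel)"
  using pair_meas0[OF alpha_meas[OF assms(1)]] pair_meas1[OF alpha_meas[OF assms(1)]] assms(2) by auto

lemma Hc_meas:
  fixes \<alpha> d :: "real \<Rightarrow> real"
  assumes "integrable lborel \<alpha>" "d \<in> borel_measurable lborel"
  shows "Hc \<alpha> d \<in> borel_measurable lborel"
proof -
  have "(\<lambda>x. \<integral>\<^sup>+ y. (\<lambda>(x, y). ennreal (\<bar>\<alpha> (y - x)\<bar> * \<bar>d y\<bar>)) (x, y) \<partial>lborel) \<in> borel_measurable lborel"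
    by (rule lborel.borel_measurable_nn_integral_fst[OF pair_meas(2)[OF assms]])
  then have m[measurable]: "(\<lambda>x. \<integral>\<^sup>+ y. ennreal (\<bar>\<alpha> (y - x)\<bar> * \<bar>d y\<bar>) \<partial>lborel) \<in> borel_measurable lborel"
    by simp
  show ?thesis unfolding Hc_def by measurable
qed

lemma Hc_bound:
  fixes \<alpha> d :: "real \<Rightarrow> real"
  assumes "integrable lborel \<alpha>" "d \<in> borel_measurable lborel" "AE y in lborel. \<bar>d y\<bar> \<le> D" "0 \<le> D"
  shows "(\<integral>\<^sup>+ y. ennreal (\<bar>\<alpha> (y - x)\<bar> * \<bar>d y\<bar>) \<partial>lborel) = ennreal (Hc \<alpha> d x)"
    "0 \<le> Hc \<alpha> d x" "Hc \<alpha> d x \<le> Anorm \<alpha> * D"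
proof -
  have "(\<integral>\<^sup>+ y. ennreal (\<bar>\<alpha> (y - x)\<bar> * \<bar>d y\<bar>) \<partial>lborel) \<le> (\<integral>\<^sup>+ y. ennreal \<bar>\<alpha> (y - x)\<bar> * ennreal D \<partial>lborel)"
    using assms(3) by (intro nn_integral_mono_AE) (auto elim!: eventually_mono simp: ennreal_mult[symmetric] mult_left_mono)
  also have "\<dots> = ennreal (Anorm \<alpha> * D)"
    using assms(1,4) by (simp add: nn_integral_multc alpha_shift_y ennreal_mult Anorm_nonneg)
  finally have le: "(\<integral>\<^sup>+ y. ennreal (\<bar>\<alpha> (y - x)\<bar> * \<bar>d y\<bar>) \<partial>lborel) \<le> ennreal (Anorm \<alpha> * D)" .
  have fin: "(\<integral>\<^sup>+ y. ennreal (\<bar>\<alpha> (y - x)\<bar> * \<bar>d y\<bar>) \<partial>lborel) < top"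
    using le by (rule le_less_trans) simp
  then show "(\<integral>\<^sup>+ y. ennreal (\<bar>\<alpha> (y - x)\<bar> * \<bar>d y\<bar>) \<partial>lborel) = ennreal (Hc \<alpha> d x)"
    unfolding Hc_def by (rule ennreal_enn2real[symmetric])
  show "0 \<le> Hc \<alpha> d x" by (simp add: Hc_def)
  show "Hc \<alpha> d x \<le> Anorm \<alpha> * D"
    unfolding Hc_def using enn2real_mono[OF le] assms(4) Anorm_nonneg by simp
qed

lemma young:
  fixes \<alpha> d :: "real \<Rightarrow> real"
  assumes p: "1 \<le> p" and \<alpha>: "integrable lborel \<alpha>" and d: "d \<in> XSp p"
  shows "Hc \<alpha> d \<in> XSp p" "Xnorm p (Hc \<alpha> d) \<le> Anorm \<alpha> * Xnorm p d"
proof -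
  define A where "A = Anorm \<alpha>"
  have A0: "0 \<le> A" by (simp add: A_def Anorm_nonneg)
  have dm[measurable]: "d \<in> borel_measurable lborel" using d by (simp add: XSp_def)
  define D where "D = Linf_norm d"
  have D0: "0 \<le> D" by (simp add: D_def linf_nonneg)
  have dD: "AE y in lborel. \<bar>d y\<bar> \<le> D" unfolding D_def by (rule linf_AE[OF XSp_ess[OF d]])
  note HB = Hc_bound[OF \<alpha> dm dD D0]
  have Hm: "Hc \<alpha> d \<in> borel_measurable lborel" by (rule Hc_meas[OF \<alpha> dm])
  have HA: "AE x in lborel. \<bar>Hc \<alpha> d x\<bar> \<le> A * D" using HB(2,3) by (simp add: A_def)
  note L = linf_le[OF Hm _ HA]
  have LH: "Linf_norm (Hc \<alpha> d) \<le> A * D" "esssup lborel (\<lambda>x. ereal \<bar>Hc \<alpha> d x\<bar>) < top"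
    using L A0 D0 by auto
  have "Hc \<alpha> d \<in> XSp p \<and> Lp_norm p (Hc \<alpha> d) \<le> A * Lp_norm p d"
  proof (cases "p = top")
    case True then show ?thesis using LH Hm by (simp add: XSp_top Lp_norm_def D_def)
  next
    case False
    define P where "P = enn2real p"
    have P: "1 \<le> P" using enn2real_ge1 p False by (auto simp: P_def)
    have di: "Ip P d < top" using d False by (simp add: XSp_fin P_def)
    have pw: "ennreal (\<bar>Hc \<alpha> d x\<bar> powr P) \<le> ennreal (A powr (P - 1)) * (\<integral>\<^sup>+ y. ennreal (\<bar>\<alpha> (y - x)\<bar> * \<bar>d y\<bar> powr P) \<partial>lborel)" for x
      using jensen_pw[OF P, of "\<lambda>y. \<bar>\<alpha> (y - x)\<bar>" "\<lambda>y. \<bar>d y\<bar>" A "Hc \<alpha> d x"]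
        alpha_shift_y[OF \<alpha>, of x] HB(1)[of x] HB(2)[of x] A0 alpha_meas[OF \<alpha>] dm
      by (simp add: A_def)
    have "Ip P (Hc \<alpha> d) \<le> (\<integral>\<^sup>+ x. ennreal (A powr (P - 1)) * (\<integral>\<^sup>+ y. ennreal (\<bar>\<alpha> (y - x)\<bar> * \<bar>d y\<bar> powr P) \<partial>lborel) \<partial>lborel)"
      unfolding Ip_def by (rule nn_integral_mono) (rule pw)
    also have "\<dots> = ennreal (A powr (P - 1)) * (\<integral>\<^sup>+ x. (\<integral>\<^sup>+ y. ennreal (\<bar>\<alpha> (y - x)\<bar> * \<bar>d y\<bar> powr P) \<partial>lborel) \<partial>lborel)"
    proof (rule nn_integral_cmult)
      have "(\<lambda>x. \<integral>\<^sup>+ y. (\<lambda>(x, y). ennreal (\<bar>\<alpha> (y - x)\<bar> * \<bar>d y\<bar> powr P)) (x, y) \<partial>lborel) \<in> borel_measurable lborel"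
        by (rule lborel.borel_measurable_nn_integral_fst[OF pair_meas(1)[OF \<alpha> dm]])
      then show "(\<lambda>x. \<integral>\<^sup>+ y. ennreal (\<bar>\<alpha> (y - x)\<bar> * \<bar>d y\<bar> powr P) \<partial>lborel) \<in> borel_measurable lborel" by simp
    qed
    also have "(\<integral>\<^sup>+ x. (\<integral>\<^sup>+ y. ennreal (\<bar>\<alpha> (y - x)\<bar> * \<bar>d y\<bar> powr P) \<partial>lborel) \<partial>lborel)
        = (\<integral>\<^sup>+ y. (\<integral>\<^sup>+ x. ennreal (\<bar>\<alpha> (y - x)\<bar> * \<bar>d y\<bar> powr P) \<partial>lborel) \<partial>lborel)"
      by (rule lborel_pair.Fubini'[symmetric]) (use pair_meas(1)[OF \<alpha> dm] in simp)
    also have "\<dots> = (\<integral>\<^sup>+ y. ennreal A * ennreal (\<bar>d y\<bar> powr P) \<partial>lborel)"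
    proof (rule nn_integral_cong)
      fix y
      have [measurable]: "\<alpha> \<in> borel_measurable borel" by (rule alpha_meas[OF \<alpha>])
      have "(\<integral>\<^sup>+ x. ennreal (\<bar>\<alpha> (y - x)\<bar> * \<bar>d y\<bar> powr P) \<partial>lborel) = (\<integral>\<^sup>+ x. ennreal \<bar>\<alpha> (y - x)\<bar> * ennreal (\<bar>d y\<bar> powr P) \<partial>lborel)"
        by (simp add: ennreal_mult)
      also have "\<dots> = ennreal A * ennreal (\<bar>d y\<bar> powr P)"
        by (subst nn_integral_multc) (auto simp: alpha_shift_x[OF \<alpha>] A_def)
      finally show "(\<integral>\<^sup>+ x. ennreal (\<bar>\<alpha> (y - x)\<bar> * \<bar>d y\<bar> powr P) \<partial>lborel) = ennreal A * ennreal (\<bar>d y\<bar> powr P)" .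
    qed
    also have "\<dots> = ennreal A * Ip P d" unfolding Ip_def by (rule nn_integral_cmult) simp
    also have "Ip P d = ennreal (Lp_norm p d powr P)" unfolding P_def by (rule Ip_eq[OF False p di[unfolded P_def]])
    finally have I: "Ip P (Hc \<alpha> d) \<le> ennreal (A powr (P - 1)) * (ennreal A * ennreal (Lp_norm p d powr P))" .
    have "ennreal (A powr (P - 1)) * (ennreal A * ennreal (Lp_norm p d powr P)) \<le> ennreal ((A * Lp_norm p d) powr P)"
    proof (cases "A = 0")
      case True then show ?thesis by simp
    next
      case False
      then have "A powr (P - 1) * (A * Lp_norm p d powr P) = (A * Lp_norm p d) powr P"
        using A0 by (simp add: powr_mult powr_diff lp_nonneg field_simps)
      then show ?thesis using A0 by (simp add: ennreal_mult[symmetric] lp_nonneg)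
    qed
    with I have I2: "Ip P (Hc \<alpha> d) \<le> ennreal ((A * Lp_norm p d) powr P)" by (rule order_trans)
    have "Ip P (Hc \<alpha> d) < top" using I2 by (rule le_less_trans) simp
    moreover have "Lp_norm p (Hc \<alpha> d) \<le> A * Lp_norm p d"
      by (rule lp_le[OF False p]) (use I2 A0 lp_nonneg[of p d] in \<open>auto simp: P_def\<close>)
    ultimately show ?thesis using LH Hm False by (simp add: XSp_fin P_def)
  qed
  then show "Hc \<alpha> d \<in> XSp p" "Xnorm p (Hc \<alpha> d) \<le> Anorm \<alpha> * Xnorm p d"
    using LH by (auto simp: Xnorm_def A_def D_def algebra_simps)
qed


lemma w_lip:
  fixes w :: "real \<Rightarrow> real"
  assumes "w C1_differentiable_on UNIV"
  shows "\<exists>B\<ge>0. \<forall>a b. \<bar>a\<bar> \<le> r \<longrightarrow> \<bar>b\<bar> \<le> r \<longrightarrow> \<bar>w a - w b\<bar> \<le> B * \<bar>a - b\<bar>"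
proof -
  define w' where "w' x = vector_derivative w (at x)" for x
  have diff: "\<And>x. w differentiable at x" and cw': "continuous_on UNIV w'"
    using assms by (auto simp: C1_differentiable_on_eq w'_def)
  define S where "S = {-\<bar>r\<bar>..\<bar>r\<bar>}"
  have "continuous_on S (\<lambda>x. \<bar>w' x\<bar>)" by (intro continuous_intros continuous_on_subset[OF cw']) auto
  then obtain x0 where x0: "x0 \<in> S" "\<And>y. y \<in> S \<Longrightarrow> \<bar>w' y\<bar> \<le> \<bar>w' x0\<bar>"
    using continuous_attains_sup[OF compact_Icc, of "-\<bar>r\<bar>" "\<bar>r\<bar>" "\<lambda>x. \<bar>w' x\<bar>"] by (auto simp: S_def)
  define B where "B = \<bar>w' x0\<bar>"
  have "\<bar>w a - w b\<bar> \<le> B * \<bar>a - b\<bar>" if "\<bar>a\<bar> \<le> r" "\<bar>b\<bar> \<le> r" for a b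
  proof -
    have "norm (w a - w b) \<le> B * norm (a - b)"
    proof (rule field_differentiable_bound[of S w w'])
      show "convex S" by (simp add: S_def)
      fix z assume "z \<in> S"
      have "(w has_vector_derivative w' z) (at z)" using diff[of z] by (simp add: w'_def vector_derivative_works)
      then show "(w has_field_derivative w' z) (at z within S)"
        by (simp add: has_real_derivative_iff_has_vector_derivative[symmetric] has_field_derivative_at_within)
      show "norm (w' z) \<le> B" using x0 \<open>z \<in> S\<close> by (simp add: B_def)
    qed (use that in \<open>auto simp: S_def\<close>)
    then show ?thesis by simp
  qed
  then show ?thesis by (intro exI[of _ B]) (auto simp: B_def)
qed

lemma F_meas:
  fixes \<alpha> w v :: "real \<Rightarrow> real"
  assumes [measurable]: "\<alpha> \<in> borel_measurable borel" "w \<in> borel_measurable borel" "v \<in> borel_measurable borel"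
  shows "peri_rhs \<alpha> w v \<in> borel_measurable lborel"
proof -
  have "(\<lambda>(x, y). \<alpha> (y - x) * w (v y - v x)) \<in> borel_measurable (lborel \<Otimes>\<^sub>M lborel)" by measurable
  then have "(\<lambda>x. \<integral> y. \<alpha> (y - x) * w (v y - v x) \<partial>lborel) \<in> borel_measurable lborel"
    by (intro lborel.borel_measurable_lebesgue_integral) simp
  then show ?thesis by (simp add: peri_rhs_def[abs_def])
qed

lemma F_zero: "w 0 = 0 \<Longrightarrow> peri_rhs \<alpha> w (\<lambda>x. 0) = (\<lambda>x. 0)"
  by (simp add: peri_rhs_def[abs_def])

lemma F_cong:
  fixes \<alpha> w v v' :: "real \<Rightarrow> real"
  assumes [measurable]: "\<alpha> \<in> borel_measurable borel" "w \<in> borel_measurable borel" "v \<in> borel_measurable borel"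
    "v' \<in> borel_measurable borel" and e: "AE x in lborel. v x = v' x"
  shows "AE x in lborel. peri_rhs \<alpha> w v x = peri_rhs \<alpha> w v' x"
  using e
proof eventually_elim
  case (elim x)
  show ?case unfolding peri_rhs_def
    by (rule integral_cong_AE) (use e elim in \<open>auto elim!: eventually_mono\<close>)
qed

lemma F_diff_bound:
  fixes \<alpha> w v v' :: "real \<Rightarrow> real"
  assumes \<alpha>: "integrable lborel \<alpha>" and wl: "\<And>a b. \<bar>a\<bar> \<le> 2*R \<Longrightarrow> \<bar>b\<bar> \<le> 2*R \<Longrightarrow> \<bar>w a - w b\<bar> \<le> B * \<bar>a - b\<bar>"
    and B: "0 \<le> B" and w0: "w 0 = 0" and wm[measurable]: "w \<in> borel_measurable borel"
    and vm[measurable]: "v \<in> borel_measurable borel" and v'm[measurable]: "v' \<in> borel_measurable borel"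
    and vR: "AE y in lborel. \<bar>v y\<bar> \<le> R" and v'R: "AE y in lborel. \<bar>v' y\<bar> \<le> R"
  shows "AE x in lborel. \<bar>peri_rhs \<alpha> w v x - peri_rhs \<alpha> w v' x\<bar>
      \<le> B * (Hc \<alpha> (\<lambda>y. v y - v' y) x + Anorm \<alpha> * \<bar>v x - v' x\<bar>)"
proof -
  have am[measurable]: "\<alpha> \<in> borel_measurable borel" by (rule alpha_meas[OF \<alpha>])
  define d where "d y = v y - v' y" for y
  have dm[measurable]: "d \<in> borel_measurable borel" unfolding d_def by measurable
  have G: "AE y in lborel. \<bar>v y\<bar> \<le> R \<and> \<bar>v' y\<bar> \<le> R" using vR v'R by eventually_elim auto
  have dR: "AE y in lborel. \<bar>d y\<bar> \<le> 2 * R" using G by eventually_elim (auto simp: d_def)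
  have R0: "0 \<le> R"
  proof (rule ccontr)
    assume nR: "\<not> 0 \<le> R"
    have "AE y::real in lborel. False"
    proof (rule eventually_mono[OF vR])
      fix y assume "\<bar>v y\<bar> \<le> R" then show False using abs_ge_zero[of "v y"] nR by linarith
    qed
    then have "ae_filter (lborel::real measure) = bot" using eventually_False by blast
    then show False using ae_filter_eq_bot_iff[of "lborel::real measure"] by simp
  qed
  have intg: "integrable lborel (\<lambda>y. \<alpha> (y - x) * w (u y - u x))"
    if um[measurable]: "u \<in> borel_measurable borel" and uR: "AE y in lborel. \<bar>u y\<bar> \<le> R" and ux: "\<bar>u x\<bar> \<le> R"
    for u :: "real \<Rightarrow> real" and x :: real
  proof (rule Bochner_Integration.integrable_bound)
    show "integrable lborel (\<lambda>y. (B * (2 * R)) * \<alpha> (- x + 1 * y))"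
      by (intro integrable_mult_right lborel_integrable_real_affine[OF \<alpha>]) simp
    show "(\<lambda>y. \<alpha> (y - x) * w (u y - u x)) \<in> borel_measurable lborel" by measurable
    show "AE y in lborel. norm (\<alpha> (y - x) * w (u y - u x)) \<le> norm ((B * (2 * R)) * \<alpha> (- x + 1 * y))"
      using uR
    proof eventually_elim
      case (elim y)
      have "\<bar>w (u y - u x) - w 0\<bar> \<le> B * \<bar>u y - u x - 0\<bar>" by (rule wl) (use elim ux in auto)
      also have "\<dots> \<le> B * (2 * R)" using elim ux B by (intro mult_left_mono) auto
      finally have "\<bar>w (u y - u x)\<bar> \<le> B * (2 * R)" using w0 by simp
      then show ?case using B R0 by (simp add: abs_mult mult.commute mult_left_mono)
    qed
  qed
  have AEx: "AE x in lborel. \<bar>v x\<bar> \<le> R \<and> \<bar>v' x\<bar> \<le> R" by (rule G)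
  then show ?thesis
  proof eventually_elim
    case (elim x)
    have ex: "\<bar>v x\<bar> \<le> R" "\<bar>v' x\<bar> \<le> R" using elim by auto
    have i1: "integrable lborel (\<lambda>y. \<alpha> (y - x) * w (v y - v x))" by (rule intg[OF vm vR]) (use elim in auto)
    have i2: "integrable lborel (\<lambda>y. \<alpha> (y - x) * w (v' y - v' x))" by (rule intg[OF v'm v'R]) (use elim in auto)
    have "peri_rhs \<alpha> w v x - peri_rhs \<alpha> w v' x = (\<integral> y. \<alpha> (y - x) * w (v y - v x) - \<alpha> (y - x) * w (v' y - v' x) \<partial>lborel)"
      unfolding peri_rhs_def by (rule Bochner_Integration.integral_diff[OF i1 i2, symmetric])
    then have "ennreal \<bar>peri_rhs \<alpha> w v x - peri_rhs \<alpha> w v' x\<bar>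
       \<le> (\<integral>\<^sup>+ y. ennreal (norm (\<alpha> (y - x) * w (v y - v x) - \<alpha> (y - x) * w (v' y - v' x))) \<partial>lborel)"
      using integral_norm_bound_ennreal[OF Bochner_Integration.integrable_diff[OF i1 i2]] by simp
    also have "\<dots> \<le> (\<integral>\<^sup>+ y. ennreal B * ennreal (\<bar>\<alpha> (y - x)\<bar> * \<bar>d y\<bar>) + ennreal (B * \<bar>d x\<bar>) * ennreal \<bar>\<alpha> (y - x)\<bar> \<partial>lborel)"
    proof (rule nn_integral_mono_AE)
      show "AE y in lborel. ennreal (norm (\<alpha> (y - x) * w (v y - v x) - \<alpha> (y - x) * w (v' y - v' x)))
         \<le> ennreal B * ennreal (\<bar>\<alpha> (y - x)\<bar> * \<bar>d y\<bar>) + ennreal (B * \<bar>d x\<bar>) * ennreal \<bar>\<alpha> (y - x)\<bar>"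
        using G
      proof eventually_elim
        case (elim y)
        have "\<bar>w (v y - v x) - w (v' y - v' x)\<bar> \<le> B * \<bar>(v y - v x) - (v' y - v' x)\<bar>"
          by (rule wl) (use elim ex in auto)
        also have "\<dots> \<le> B * (\<bar>d y\<bar> + \<bar>d x\<bar>)" using B by (intro mult_left_mono) (auto simp: d_def)
        finally have wb: "\<bar>w (v y - v x) - w (v' y - v' x)\<bar> \<le> B * (\<bar>d y\<bar> + \<bar>d x\<bar>)" .
        have "norm (\<alpha> (y - x) * w (v y - v x) - \<alpha> (y - x) * w (v' y - v' x))
            = \<bar>\<alpha> (y - x)\<bar> * \<bar>w (v y - v x) - w (v' y - v' x)\<bar>"
          by (simp add: abs_mult right_diff_distrib[symmetric])
        also have "\<dots> \<le> \<bar>\<alpha> (y - x)\<bar> * (B * (\<bar>d y\<bar> + \<bar>d x\<bar>))" by (intro mult_left_mono wb) auto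
        also have "\<dots> = B * (\<bar>\<alpha> (y - x)\<bar> * \<bar>d y\<bar>) + (B * \<bar>d x\<bar>) * \<bar>\<alpha> (y - x)\<bar>" by (simp add: algebra_simps)
        finally show ?case using B by (simp add: ennreal_mult[symmetric] ennreal_plus[symmetric] del: ennreal_plus)
      qed
    qed
    also have "\<dots> = ennreal B * (\<integral>\<^sup>+ y. ennreal (\<bar>\<alpha> (y - x)\<bar> * \<bar>d y\<bar>) \<partial>lborel) + ennreal (B * \<bar>d x\<bar>) * (\<integral>\<^sup>+ y. ennreal \<bar>\<alpha> (y - x)\<bar> \<partial>lborel)"
      by (simp add: nn_integral_add nn_integral_cmult)
    also have "\<dots> = ennreal (B * (Hc \<alpha> d x + Anorm \<alpha> * \<bar>d x\<bar>))"
      using Hc_bound(1,2)[OF \<alpha> _ dR, of x] R0 B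
      by (simp add: alpha_shift_y[OF \<alpha>] ennreal_mult[symmetric] ennreal_plus[symmetric] Anorm_nonneg algebra_simps del: ennreal_plus)
    finally have "ennreal \<bar>peri_rhs \<alpha> w v x - peri_rhs \<alpha> w v' x\<bar> \<le> ennreal (B * (Hc \<alpha> d x + Anorm \<alpha> * \<bar>d x\<bar>))" .
    then show ?case
      using B Hc_bound(2)[OF \<alpha> _ dR, of x] R0 Anorm_nonneg[of \<alpha>]
      by (simp add: d_def[abs_def] ennreal_le_iff)
  qed
qed


lemma C1_meas:
  fixes w :: "real \<Rightarrow> real"
  assumes "w C1_differentiable_on UNIV"
  shows "w \<in> borel_measurable borel"
proof (rule borel_measurable_continuous_onI)
  have "\<And>x. w differentiable at x" using assms by (auto simp: C1_differentiable_on_eq)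
  then show "continuous_on UNIV w"
    by (intro continuous_at_imp_continuous_on ballI differentiable_imp_continuous_within) auto
qed

lemma F_lip:
  fixes \<alpha> w :: "real \<Rightarrow> real"
  assumes p: "1 \<le> p" and \<alpha>: "integrable lborel \<alpha>" and wC: "w C1_differentiable_on UNIV" and w0: "w 0 = 0"
  shows "\<exists>K\<ge>0. \<forall>v v'. v \<in> XSp p \<longrightarrow> v' \<in> XSp p \<longrightarrow> Linf_norm v \<le> R \<longrightarrow> Linf_norm v' \<le> R \<longrightarrow>
     (\<lambda>x. peri_rhs \<alpha> w v x - peri_rhs \<alpha> w v' x) \<in> XSp p \<and>
     Xnorm p (\<lambda>x. peri_rhs \<alpha> w v x - peri_rhs \<alpha> w v' x) \<le> K * Xnorm p (\<lambda>x. v x - v' x)"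
proof -
  obtain B where B: "0 \<le> B" and wl: "\<And>a b. \<bar>a\<bar> \<le> 2*R \<Longrightarrow> \<bar>b\<bar> \<le> 2*R \<Longrightarrow> \<bar>w a - w b\<bar> \<le> B * \<bar>a - b\<bar>"
    using w_lip[OF wC, of "2*R"] by blast
  have wm: "w \<in> borel_measurable borel" by (rule C1_meas[OF wC])
  have am: "\<alpha> \<in> borel_measurable borel" by (rule alpha_meas[OF \<alpha>])
  define A where "A = Anorm \<alpha>"
  have A0: "0 \<le> A" by (simp add: A_def Anorm_nonneg)
  show ?thesis
  proof (intro exI[of _ "2 * B * A"] conjI allI impI)
    show "0 \<le> 2 * B * A" using A0 B by simp
    fix v v' :: "real \<Rightarrow> real"
    assume v: "v \<in> XSp p" and v': "v' \<in> XSp p" and vR: "Linf_norm v \<le> R" and v'R: "Linf_norm v' \<le> R"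
    have vm: "v \<in> borel_measurable borel" "v' \<in> borel_measurable borel" using v v' by (auto simp: XSp_def)
    have vA: "AE y in lborel. \<bar>v y\<bar> \<le> R" using linf_AE[OF XSp_ess[OF v]] vR by (auto elim!: eventually_mono)
    have v'A: "AE y in lborel. \<bar>v' y\<bar> \<le> R" using linf_AE[OF XSp_ess[OF v']] v'R by (auto elim!: eventually_mono)
    define d where "d = (\<lambda>x. v x - v' x)"
    have d: "d \<in> XSp p" unfolding d_def by (rule XSp_diff[OF p v v'])
    have dm: "d \<in> borel_measurable lborel" using d by (simp add: XSp_def)
    note Y = young[OF p \<alpha> d]
    have ad: "(\<lambda>x. \<bar>d x\<bar>) \<in> XSp p" "Xnorm p (\<lambda>x. \<bar>d x\<bar>) \<le> Xnorm p d"
      using XSp_dom(1)[OF p d, of "\<lambda>x. \<bar>d x\<bar>"] Xnorm_dom[OF p d, of "\<lambda>x. \<bar>d x\<bar>"] dm by auto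
    define g where "g = (\<lambda>x. B * (Hc \<alpha> d x + A * \<bar>d x\<bar>))"
    have s1: "(\<lambda>x. A * \<bar>d x\<bar>) \<in> XSp p" by (rule XSp_scale(1)[OF p ad(1)])
    have s2: "(\<lambda>x. Hc \<alpha> d x + A * \<bar>d x\<bar>) \<in> XSp p" by (rule XSp_add(1)[OF p Y(1) s1])
    have g: "g \<in> XSp p" unfolding g_def by (rule XSp_scale(1)[OF p s2])
    have "Xnorm p g = B * Xnorm p (\<lambda>x. Hc \<alpha> d x + A * \<bar>d x\<bar>)"
      unfolding g_def using Xnorm_scale[OF p s2, of B] B by simp
    also have "\<dots> \<le> B * (Xnorm p (Hc \<alpha> d) + Xnorm p (\<lambda>x. A * \<bar>d x\<bar>))"
      using Xnorm_add[OF p Y(1) s1] B by (intro mult_left_mono) auto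
    also have "Xnorm p (\<lambda>x. A * \<bar>d x\<bar>) = A * Xnorm p (\<lambda>x. \<bar>d x\<bar>)"
      using Xnorm_scale[OF p ad(1), of A] A0 by simp
    also have "B * (Xnorm p (Hc \<alpha> d) + A * Xnorm p (\<lambda>x. \<bar>d x\<bar>)) \<le> B * (A * Xnorm p d + A * Xnorm p d)"
      using Y(2) ad(2) A0 B by (intro mult_left_mono add_mono mult_left_mono) (auto simp: A_def)
    finally have gX: "Xnorm p g \<le> 2 * B * A * Xnorm p d" by (simp add: algebra_simps)
    have Fm: "(\<lambda>x. peri_rhs \<alpha> w v x - peri_rhs \<alpha> w v' x) \<in> borel_measurable lborel"
      using F_meas[OF am wm vm(1)] F_meas[OF am wm vm(2)] by measurable
    have FB: "AE x in lborel. \<bar>peri_rhs \<alpha> w v x - peri_rhs \<alpha> w v' x\<bar>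
      \<le> B * (Hc \<alpha> (\<lambda>y. v y - v' y) x + Anorm \<alpha> * \<bar>v x - v' x\<bar>)"
      by (rule F_diff_bound[OF \<alpha> _ B w0 wm vm vA v'A]) (fact wl)
    have bnd: "AE x in lborel. \<bar>peri_rhs \<alpha> w v x - peri_rhs \<alpha> w v' x\<bar> \<le> \<bar>g x\<bar>"
    proof (rule eventually_mono[OF FB])
      fix x assume h: "\<bar>peri_rhs \<alpha> w v x - peri_rhs \<alpha> w v' x\<bar>
        \<le> B * (Hc \<alpha> (\<lambda>y. v y - v' y) x + Anorm \<alpha> * \<bar>v x - v' x\<bar>)"
      have "0 \<le> Hc \<alpha> d x" by (simp add: Hc_def)
      then have "0 \<le> g x" unfolding g_def using B A0 by simp
      then show "\<bar>peri_rhs \<alpha> w v x - peri_rhs \<alpha> w v' x\<bar> \<le> \<bar>g x\<bar>"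
        using h by (simp add: g_def d_def A_def)
    qed
    show "(\<lambda>x. peri_rhs \<alpha> w v x - peri_rhs \<alpha> w v' x) \<in> XSp p" by (rule XSp_dom(1)[OF p g Fm bnd])
    show "Xnorm p (\<lambda>x. peri_rhs \<alpha> w v x - peri_rhs \<alpha> w v' x) \<le> 2 * B * A * Xnorm p (\<lambda>x. v x - v' x)"
      using Xnorm_dom[OF p g Fm bnd] gX by (simp add: d_def)
  qed
qed




lemma vderiv_iff:
  fixes U :: "real \<Rightarrow> 'a::real_normed_vector"
  shows "(U has_vector_derivative U') (at t within S) \<longleftrightarrow>
    ((\<lambda>s. norm ((U s - U t) /\<^sub>R (s - t) - U')) \<longlongrightarrow> 0) (at t within S)"
proof -
  have ev: "eventually (\<lambda>s. norm ((1 / norm (s - t)) *\<^sub>R (U s - (U t + (s - t) *\<^sub>R U')))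
      = norm ((U s - U t) /\<^sub>R (s - t) - U')) (at t within S)"
    unfolding eventually_at_filter
  proof (rule always_eventually, intro allI impI)
    fix s assume "s \<noteq> t"
    then have h: "s - t \<noteq> 0" by simp
    have "(1 / (s - t)) *\<^sub>R (U s - (U t + (s - t) *\<^sub>R U')) = (1 / (s - t)) *\<^sub>R (U s - U t) - ((1 / (s - t)) * (s - t)) *\<^sub>R U'"
      by (simp add: scaleR_diff_right scaleR_add_right)
    also have "\<dots> = (U s - U t) /\<^sub>R (s - t) - U'" using h by (simp add: divide_inverse)
    finally have "(U s - U t) /\<^sub>R (s - t) - U' = (1 / (s - t)) *\<^sub>R (U s - (U t + (s - t) *\<^sub>R U'))" by simp
    then show "norm ((1 / norm (s - t)) *\<^sub>R (U s - (U t + (s - t) *\<^sub>R U'))) = norm ((U s - U t) /\<^sub>R (s - t) - U')"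
      by simp
  qed
  have "(U has_vector_derivative U') (at t within S) \<longleftrightarrow>
      ((\<lambda>s. (1 / norm (s - t)) *\<^sub>R (U s - (U t + (s - t) *\<^sub>R U'))) \<longlongrightarrow> 0) (at t within S)"
    unfolding has_vector_derivative_def has_derivative_within
    by (simp add: bounded_linear_scaleR_left)
  also have "\<dots> \<longleftrightarrow> ((\<lambda>s. norm ((1 / norm (s - t)) *\<^sub>R (U s - (U t + (s - t) *\<^sub>R U')))) \<longlongrightarrow> 0) (at t within S)"
    by (rule tendsto_norm_zero_iff[symmetric])
  also have "\<dots> \<longleftrightarrow> ((\<lambda>s. norm ((U s - U t) /\<^sub>R (s - t) - U')) \<longlongrightarrow> 0) (at t within S)"
    by (rule tendsto_cong[OF ev])
  finally show ?thesis .
qed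

definition embF :: "ennreal \<Rightarrow> (real \<Rightarrow> real) \<Rightarrow> ennreal \<Rightarrow> real \<Rightarrow> real" where
  "embF p v = (\<lambda>q x. if q = p then v x else 0)"

definition emb :: "ennreal \<Rightarrow> (real \<Rightarrow> real) \<Rightarrow> xf" where
  "emb p v = abs_xf (embF p v)"

definition xcomp :: "ennreal \<Rightarrow> xf \<Rightarrow> real \<Rightarrow> real" where
  "xcomp p X = rep_xf X p"

lemma maxp: "1 \<le> p \<Longrightarrow> max p (1::ennreal) = p" by (simp add: max_def)

lemma famS_embF:
  assumes p: "1 \<le> p" and v: "v \<in> XSp p"
  shows "famS (embF p v)"
proof (rule famS_I[of _ "Xnorm p v"])
  fix q
  show "embF p v q \<in> XSp (max q 1)"
    by (cases "q = p") (auto simp: embF_def maxp[OF p] v XSp_zero)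
  show "Xnorm (max q 1) (embF p v q) \<le> Xnorm p v"
    by (cases "q = p") (auto simp: embF_def maxp[OF p] Xnorm_zero Xnorm_nonneg)
qed

lemma norm_emb:
  assumes p: "1 \<le> p" and v: "v \<in> XSp p"
  shows "norm (emb p v) = Xnorm p v"
proof -
  have "famN (embF p v) = Xnorm p v"
  proof (rule antisym)
    show "famN (embF p v) \<le> Xnorm p v"
    proof (rule famN_le)
      fix q show "Xnorm (max q 1) (embF p v q) \<le> Xnorm p v"
        by (cases "q = p") (auto simp: embF_def maxp[OF p] Xnorm_zero Xnorm_nonneg)
    qed
    show "Xnorm p v \<le> famN (embF p v)"
      using famN_ge[OF famS_embF[OF p v], of p] by (simp add: embF_def maxp[OF p])
  qed
  then show ?thesis by (simp add: emb_def xf_norm_abs[OF famS_embF[OF p v]])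
qed

lemma emb_diff:
  assumes p: "1 \<le> p" and u: "u \<in> XSp p" and v: "v \<in> XSp p"
  shows "emb p u - emb p v = emb p (\<lambda>x. u x - v x)"
proof -
  have "(\<lambda>q x. embF p u q x - embF p v q x) = embF p (\<lambda>x. u x - v x)"
    by (auto simp: embF_def fun_eq_iff)
  then show ?thesis
    by (simp add: emb_def xf_minus_abs[OF famS_embF[OF p u] famS_embF[OF p v]])
qed

lemma emb_scale:
  assumes p: "1 \<le> p" and u: "u \<in> XSp p"
  shows "c *\<^sub>R emb p u = emb p (\<lambda>x. c * u x)"
proof -
  have "(\<lambda>q x. c * embF p u q x) = embF p (\<lambda>x. c * u x)"
    by (auto simp: embF_def fun_eq_iff)
  then show ?thesis
    by (simp add: emb_def xf_scale_abs[OF famS_embF[OF p u]])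
qed

lemma emb_eq:
  assumes p: "1 \<le> p" and u: "u \<in> XSp p" and v: "v \<in> XSp p"
  shows "emb p u = emb p v \<longleftrightarrow> (AE x in lborel. u x = v x)"
proof -
  have "emb p u = emb p v \<longleftrightarrow> (\<forall>q. AE x in lborel. embF p u q x = embF p v q x)"
    unfolding emb_def by (rule abs_eq_iff[OF famS_embF[OF p u] famS_embF[OF p v]])
  also have "\<dots> \<longleftrightarrow> (AE x in lborel. u x = v x)"
  proof
    assume "\<forall>q. AE x in lborel. embF p u q x = embF p v q x"
    then have "AE x in lborel. embF p u p x = embF p v p x" by blast
    then show "AE x in lborel. u x = v x" by (simp add: embF_def)
  next
    assume A: "AE x in lborel. u x = v x"
    show "\<forall>q. AE x in lborel. embF p u q x = embF p v q x"
    proof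
      fix q show "AE x in lborel. embF p u q x = embF p v q x"
        by (cases "q = p") (use A in \<open>auto simp: embF_def\<close>)
    qed
  qed
  finally show ?thesis .
qed

lemma comp_XSp: "1 \<le> p \<Longrightarrow> xcomp p X \<in> XSp p"
  using famS_X[OF famS_rep[of X], of p] by (simp add: xcomp_def maxp)

lemma rep_abs_AE: "famS F \<Longrightarrow> AE x in lborel. rep_xf (abs_xf F) q x = F q x"
  using Quotient3_rep_abs[OF xf_Q, of F] by (simp add: famRR famR_def)

lemma comp_lin:
  assumes p: "1 \<le> p"
  shows "AE x in lborel. xcomp p (a *\<^sub>R (X - Y) - Z) x = a * (xcomp p X x - xcomp p Y x) - xcomp p Z x"
proof -
  have SX: "famS (rep_xf X)" "famS (rep_xf Y)" "famS (rep_xf Z)" by (simp_all add: famS_rep)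
  have S1: "famS (\<lambda>q x. rep_xf X q x - rep_xf Y q x)" by (rule famS_diff[OF SX(1,2)])
  have S2: "famS (\<lambda>q x. a * (rep_xf X q x - rep_xf Y q x))" by (rule famS_scale[OF S1])
  have "a *\<^sub>R (X - Y) - Z = abs_xf (\<lambda>q x. a * (rep_xf X q x - rep_xf Y q x) - rep_xf Z q x)"
  proof -
    have "a *\<^sub>R (X - Y) - Z = a *\<^sub>R (abs_xf (rep_xf X) - abs_xf (rep_xf Y)) - abs_xf (rep_xf Z)" by simp
    also have "\<dots> = abs_xf (\<lambda>q x. a * (rep_xf X q x - rep_xf Y q x) - rep_xf Z q x)"
      by (simp only: xf_minus_abs[OF SX(1,2)] xf_scale_abs[OF S1] xf_minus_abs[OF S2 SX(3)])
    finally show ?thesis .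
  qed
  then show ?thesis
    using rep_abs_AE[OF famS_diff[OF S2 SX(3)], of p] by (simp add: xcomp_def)
qed

lemma comp_minus:
  assumes p: "1 \<le> p"
  shows "AE x in lborel. xcomp p (X - Y) x = xcomp p X x - xcomp p Y x"
proof -
  have "AE x in lborel. xcomp p (1 *\<^sub>R (X - Y) - 0) x = 1 * (xcomp p X x - xcomp p Y x) - xcomp p 0 x"
    by (rule comp_lin[OF p])
  moreover have "AE x in lborel. xcomp p 0 x = 0"
    using rep_abs_AE[OF famS_zero, of p] by (simp add: xcomp_def xf_zero_abs)
  ultimately show ?thesis by eventually_elim simp
qed

lemma Xnorm_comp: "1 \<le> p \<Longrightarrow> Xnorm p (xcomp p X) \<le> norm X"
  using famN_ge[OF famS_rep[of X], of p] xf_norm_abs[OF famS_rep[of X]]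
  by (simp add: xcomp_def maxp)

lemma comp_emb: "1 \<le> p \<Longrightarrow> v \<in> XSp p \<Longrightarrow> AE x in lborel. xcomp p (emb p v) x = v x"
  using rep_abs_AE[OF famS_embF, of p v p] by (simp add: xcomp_def emb_def embF_def)

lemma Xnorm_comp_diff:
  assumes p: "1 \<le> p"
  shows "Xnorm p (\<lambda>x. xcomp p X x - xcomp p Y x) \<le> norm (X - Y)"
proof -
  have "Xnorm p (\<lambda>x. xcomp p X x - xcomp p Y x) = Xnorm p (xcomp p (X - Y))"
    using comp_minus[OF p, of X Y] comp_XSp[OF p] XSp_diff[OF p comp_XSp[OF p] comp_XSp[OF p]]
    by (intro Xnorm_cong) (auto simp: XSp_def elim!: eventually_mono)
  also have "\<dots> \<le> norm (X - Y)" by (rule Xnorm_comp[OF p])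
  finally show ?thesis .
qed


lemma FX:
  fixes \<alpha> w :: "real \<Rightarrow> real"
  assumes p: "1 \<le> p" and \<alpha>: "integrable lborel \<alpha>" and wC: "w C1_differentiable_on UNIV" and w0: "w 0 = 0"
    and v: "v \<in> XSp p"
  shows "peri_rhs \<alpha> w v \<in> XSp p"
proof -
  obtain K where K: "\<forall>v' v''. v' \<in> XSp p \<longrightarrow> v'' \<in> XSp p \<longrightarrow> Linf_norm v' \<le> Linf_norm v \<longrightarrow> Linf_norm v'' \<le> Linf_norm v \<longrightarrow>
     (\<lambda>x. peri_rhs \<alpha> w v' x - peri_rhs \<alpha> w v'' x) \<in> XSp p \<and>
     Xnorm p (\<lambda>x. peri_rhs \<alpha> w v' x - peri_rhs \<alpha> w v'' x) \<le> K * Xnorm p (\<lambda>x. v' x - v'' x)"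
    using F_lip[OF p \<alpha> wC w0, where R="Linf_norm v"] by blast
  have "(\<lambda>x. peri_rhs \<alpha> w v x - peri_rhs \<alpha> w (\<lambda>x. 0) x) \<in> XSp p"
    using K[rule_format, OF v XSp_zero order.refl] by (simp add: linf_zero linf_nonneg)
  then show ?thesis using F_zero[where w=w and \<alpha>=\<alpha>, OF w0] by simp
qed

definition Phi :: "ennreal \<Rightarrow> (real \<Rightarrow> real) \<Rightarrow> (real \<Rightarrow> real) \<Rightarrow> xf \<Rightarrow> xf" where
  "Phi p \<alpha> w X = emb p (peri_rhs \<alpha> w (xcomp p X))"

lemma Phi_lip:
  fixes \<alpha> w :: "real \<Rightarrow> real"
  assumes p: "1 \<le> p" and \<alpha>: "integrable lborel \<alpha>" and wC: "w C1_differentiable_on UNIV" and w0: "w 0 = 0"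
  shows "\<exists>K\<ge>0. \<forall>X Y. norm X \<le> R \<longrightarrow> norm Y \<le> R \<longrightarrow> norm (Phi p \<alpha> w X - Phi p \<alpha> w Y) \<le> K * norm (X - Y)"
proof -
  obtain K where K0: "K \<ge> 0" and K: "\<forall>v v'. v \<in> XSp p \<longrightarrow> v' \<in> XSp p \<longrightarrow> Linf_norm v \<le> R \<longrightarrow> Linf_norm v' \<le> R \<longrightarrow>
     (\<lambda>x. peri_rhs \<alpha> w v x - peri_rhs \<alpha> w v' x) \<in> XSp p \<and>
     Xnorm p (\<lambda>x. peri_rhs \<alpha> w v x - peri_rhs \<alpha> w v' x) \<le> K * Xnorm p (\<lambda>x. v x - v' x)"
    using F_lip[OF p \<alpha> wC w0, where R=R] by blast
  show ?thesis
  proof (intro exI[of _ K] conjI allI impI K0)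
    fix X Y :: xf assume X: "norm X \<le> R" and Y: "norm Y \<le> R"
    have u: "xcomp p X \<in> XSp p" "xcomp p Y \<in> XSp p" by (simp_all add: comp_XSp[OF p])
    have uR: "Linf_norm (xcomp p X) \<le> R" using linf_le_Xnorm[of "xcomp p X" p] Xnorm_comp[OF p, of X] X by linarith
    have vR: "Linf_norm (xcomp p Y) \<le> R" using linf_le_Xnorm[of "xcomp p Y" p] Xnorm_comp[OF p, of Y] Y by linarith
    have H: "(\<lambda>x. peri_rhs \<alpha> w (xcomp p X) x - peri_rhs \<alpha> w (xcomp p Y) x) \<in> XSp p"
      "Xnorm p (\<lambda>x. peri_rhs \<alpha> w (xcomp p X) x - peri_rhs \<alpha> w (xcomp p Y) x) \<le> K * Xnorm p (\<lambda>x. xcomp p X x - xcomp p Y x)"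
      using K[rule_format, OF u(1) u(2) uR vR] by blast+
    have "Phi p \<alpha> w X - Phi p \<alpha> w Y = emb p (\<lambda>x. peri_rhs \<alpha> w (xcomp p X) x - peri_rhs \<alpha> w (xcomp p Y) x)"
      unfolding Phi_def by (rule emb_diff[OF p FX[OF p \<alpha> wC w0 u(1)] FX[OF p \<alpha> wC w0 u(2)]])
    then have "norm (Phi p \<alpha> w X - Phi p \<alpha> w Y) = Xnorm p (\<lambda>x. peri_rhs \<alpha> w (xcomp p X) x - peri_rhs \<alpha> w (xcomp p Y) x)"
      using norm_emb[OF p H(1)] by simp
    also have "\<dots> \<le> K * Xnorm p (\<lambda>x. xcomp p X x - xcomp p Y x)" by (rule H(2))
    also have "\<dots> \<le> K * norm (X - Y)" using Xnorm_comp_diff[OF p, of X Y] K0 by (intro mult_left_mono) auto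
    finally show "norm (Phi p \<alpha> w X - Phi p \<alpha> w Y) \<le> K * norm (X - Y)" .
  qed
qed

definition Gp :: "ennreal \<Rightarrow> (real \<Rightarrow> real) \<Rightarrow> (real \<Rightarrow> real) \<Rightarrow> xf \<times> xf \<Rightarrow> xf \<times> xf" where
  "Gp p \<alpha> w = (\<lambda>z. (snd z, Phi p \<alpha> w (fst z)))"

lemma G_lip:
  fixes \<alpha> w :: "real \<Rightarrow> real"
  assumes p: "1 \<le> p" and \<alpha>: "integrable lborel \<alpha>" and wC: "w C1_differentiable_on UNIV" and w0: "w 0 = 0"
  shows "\<exists>L. L-lipschitz_on (cball 0 R) (Gp p \<alpha> w)"
proof -
  obtain K where K0: "K \<ge> 0" and K: "\<forall>X Y. norm X \<le> R \<longrightarrow> norm Y \<le> R \<longrightarrow> norm (Phi p \<alpha> w X - Phi p \<alpha> w Y) \<le> K * norm (X - Y)"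
    using Phi_lip[OF p \<alpha> wC w0, where R=R] by blast
  show ?thesis
  proof (intro exI[of _ "1 + K"] lipschitz_onI)
    show "0 \<le> 1 + K" using K0 by simp
    fix z z' :: "xf \<times> xf" assume z: "z \<in> cball 0 R" "z' \<in> cball 0 R"
    have nz: "norm (fst z) \<le> R" "norm (fst z') \<le> R"
      using z norm_fst_le[of "fst z" "snd z"] norm_fst_le[of "fst z'" "snd z'"] by (auto simp: dist_norm)
    have zz: "z - z' = (fst z - fst z', snd z - snd z')" by (simp add: prod_eq_iff)
    have n1: "norm (snd z - snd z') \<le> norm (z - z')"
      unfolding zz by (rule norm_snd_le)
    have n2: "norm (fst z - fst z') \<le> norm (z - z')"
      unfolding zz by (rule norm_fst_le)
    have n3: "norm (Phi p \<alpha> w (fst z) - Phi p \<alpha> w (fst z')) \<le> K * norm (fst z - fst z')" using K[rule_format, OF nz] .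
    have "dist (Gp p \<alpha> w z) (Gp p \<alpha> w z') = norm (snd z - snd z', Phi p \<alpha> w (fst z) - Phi p \<alpha> w (fst z'))"
      by (simp add: Gp_def dist_norm)
    also have "\<dots> \<le> norm (snd z - snd z') + norm (Phi p \<alpha> w (fst z) - Phi p \<alpha> w (fst z'))" by (rule norm_Pair_le)
    also have "\<dots> \<le> norm (z - z') + K * norm (z - z')" using n1 n2 n3 K0 mult_left_mono[OF n2 K0] by linarith
    finally show "dist (Gp p \<alpha> w z) (Gp p \<alpha> w z') \<le> (1 + K) * dist z z'" by (simp add: dist_norm algebra_simps)
  qed
qed

lemma comp_meas: "1 \<le> p \<Longrightarrow> xcomp p X \<in> borel_measurable borel"
  using comp_XSp[of p X] by (simp add: XSp_def)

lemma Xder_from: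
  assumes p: "1 \<le> p" and d: "(U has_vector_derivative U') (at t within S)"
  shows "((\<lambda>s. Xnorm p (\<lambda>x. (xcomp p (U s) x - xcomp p (U t) x) / (s - t) - xcomp p U' x)) \<longlongrightarrow> 0) (at t within S)"
proof (rule tendsto_sandwich[of "\<lambda>s. 0" _ _ "\<lambda>s. norm ((U s - U t) /\<^sub>R (s - t) - U')"])
  show "\<forall>\<^sub>F s in at t within S. 0 \<le> Xnorm p (\<lambda>x. (xcomp p (U s) x - xcomp p (U t) x) / (s - t) - xcomp p U' x)"
    by (simp add: Xnorm_nonneg)
  show "\<forall>\<^sub>F s in at t within S. Xnorm p (\<lambda>x. (xcomp p (U s) x - xcomp p (U t) x) / (s - t) - xcomp p U' x)
      \<le> norm ((U s - U t) /\<^sub>R (s - t) - U')"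
  proof (rule always_eventually, rule allI)
    fix s
    have m[measurable]: "\<And>X. xcomp p X \<in> borel_measurable borel" by (rule comp_meas[OF p])
    have "Xnorm p (\<lambda>x. (xcomp p (U s) x - xcomp p (U t) x) / (s - t) - xcomp p U' x)
        = Xnorm p (xcomp p ((1 / (s - t)) *\<^sub>R (U s - U t) - U'))"
    proof (rule Xnorm_cong)
      show "(\<lambda>x. (xcomp p (U s) x - xcomp p (U t) x) / (s - t) - xcomp p U' x) \<in> borel_measurable lborel" by measurable
      show "xcomp p ((1 / (s - t)) *\<^sub>R (U s - U t) - U') \<in> borel_measurable lborel" by measurable
      show "AE x in lborel. (xcomp p (U s) x - xcomp p (U t) x) / (s - t) - xcomp p U' x = xcomp p ((1 / (s - t)) *\<^sub>R (U s - U t) - U') x"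
        using comp_lin[OF p, of "1 / (s - t)" "U s" "U t" U'] by eventually_elim simp
    qed
    also have "\<dots> \<le> norm ((1 / (s - t)) *\<^sub>R (U s - U t) - U')" by (rule Xnorm_comp[OF p])
    also have "(1 / (s - t)) *\<^sub>R (U s - U t) = (U s - U t) /\<^sub>R (s - t)" by (simp add: divide_inverse)
    finally show "Xnorm p (\<lambda>x. (xcomp p (U s) x - xcomp p (U t) x) / (s - t) - xcomp p U' x) \<le> norm ((U s - U t) /\<^sub>R (s - t) - U')" .
  qed
  show "((\<lambda>s. 0) \<longlongrightarrow> 0) (at t within S)" by simp
  show "((\<lambda>s. norm ((U s - U t) /\<^sub>R (s - t) - U')) \<longlongrightarrow> 0) (at t within S)" using d vderiv_iff by blast
qed

lemma Xder_to:
  assumes p: "1 \<le> p" and uS: "\<And>s. s \<in> S \<Longrightarrow> u s \<in> XSp p" and t: "t \<in> S" and v: "v \<in> XSp p"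
    and lim: "((\<lambda>s. Xnorm p (\<lambda>x. (u s x - u t x) / (s - t) - v x)) \<longlongrightarrow> 0) (at t within S)"
  shows "((\<lambda>s. emb p (u s)) has_vector_derivative emb p v) (at t within S)"
proof -
  have ev: "eventually (\<lambda>s. Xnorm p (\<lambda>x. (u s x - u t x) / (s - t) - v x)
      = norm ((emb p (u s) - emb p (u t)) /\<^sub>R (s - t) - emb p v)) (at t within S)"
    unfolding eventually_at_filter
  proof (rule always_eventually, intro allI impI)
    fix s assume "s \<noteq> t" "s \<in> S"
    have us: "u s \<in> XSp p" using uS \<open>s \<in> S\<close> by blast
    have ut: "u t \<in> XSp p" using uS t by blast
    have d1: "(\<lambda>x. u s x - u t x) \<in> XSp p" by (rule XSp_diff[OF p us ut])
    have d2: "(\<lambda>x. inverse (s - t) * (u s x - u t x)) \<in> XSp p" by (rule XSp_scale(1)[OF p d1])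
    have "(emb p (u s) - emb p (u t)) /\<^sub>R (s - t) - emb p v = emb p (\<lambda>x. inverse (s - t) * (u s x - u t x) - v x)"
      by (simp add: emb_diff[OF p us ut] emb_scale[OF p d1] emb_diff[OF p d2 v])
    then have "norm ((emb p (u s) - emb p (u t)) /\<^sub>R (s - t) - emb p v) = Xnorm p (\<lambda>x. inverse (s - t) * (u s x - u t x) - v x)"
      using norm_emb[OF p XSp_diff[OF p d2 v]] by simp
    also have "(\<lambda>x. inverse (s - t) * (u s x - u t x) - v x) = (\<lambda>x. (u s x - u t x) / (s - t) - v x)"
      by (simp add: divide_inverse mult.commute)
    finally show "Xnorm p (\<lambda>x. (u s x - u t x) / (s - t) - v x) = norm ((emb p (u s) - emb p (u t)) /\<^sub>R (s - t) - emb p v)"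
      by simp
  qed
  have "((\<lambda>s. norm ((emb p (u s) - emb p (u t)) /\<^sub>R (s - t) - emb p v)) \<longlongrightarrow> 0) (at t within S)"
    using lim tendsto_cong[OF ev] by blast
  then show ?thesis using vderiv_iff by blast
qed

lemma Xcont_from:
  assumes p: "1 \<le> p" and c: "(W \<longlongrightarrow> W t) (at t within S)"
  shows "((\<lambda>s. Xnorm p (\<lambda>x. xcomp p (W s) x - xcomp p (W t) x)) \<longlongrightarrow> 0) (at t within S)"
proof (rule tendsto_sandwich[of "\<lambda>s. 0" _ _ "\<lambda>s. norm (W s - W t)"])
  show "\<forall>\<^sub>F s in at t within S. 0 \<le> Xnorm p (\<lambda>x. xcomp p (W s) x - xcomp p (W t) x)" by (simp add: Xnorm_nonneg)
  show "\<forall>\<^sub>F s in at t within S. Xnorm p (\<lambda>x. xcomp p (W s) x - xcomp p (W t) x) \<le> norm (W s - W t)"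
    by (rule always_eventually) (simp add: Xnorm_comp_diff[OF p])
  show "((\<lambda>s. 0) \<longlongrightarrow> 0) (at t within S)" by simp
  have "((\<lambda>s. W s - W t) \<longlongrightarrow> 0) (at t within S)" using c by (rule LIM_zero)
  then show "((\<lambda>s. norm (W s - W t)) \<longlongrightarrow> 0) (at t within S)" by (rule tendsto_norm_zero)
qed

lemma vd_fst: "(Z has_vector_derivative z') F \<Longrightarrow> ((\<lambda>s. fst (Z s)) has_vector_derivative fst z') F"
  unfolding has_vector_derivative_def by (drule has_derivative_fst) simp

lemma vd_snd: "(Z has_vector_derivative z') F \<Longrightarrow> ((\<lambda>s. snd (Z s)) has_vector_derivative snd z') F"
  unfolding has_vector_derivative_def by (drule has_derivative_snd) simp


lemma lower_sol:
  fixes \<alpha> w :: "real \<Rightarrow> real"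
  assumes p: "1 \<le> p" and \<alpha>: "integrable lborel \<alpha>" and wC: "w C1_differentiable_on UNIV" and w0: "w 0 = 0"
    and a: "a \<in> XSp p" and b: "b \<in> XSp p"
    and Z0: "Z 0 = (emb p a, emb p b)"
    and dZ: "\<And>t. t \<in> {0..T} \<Longrightarrow> (Z has_vector_derivative Gp p \<alpha> w (Z t)) (at t within {0..T})"
  shows "is_solution p \<alpha> w T a b (\<lambda>t. xcomp p (fst (Z t)))"
proof -
  define U where "U t = fst (Z t)" for t
  define U1 where "U1 t = snd (Z t)" for t
  define W where "W t = Phi p \<alpha> w (U t)" for t
  have dU: "(U has_vector_derivative U1 t) (at t within {0..T})" if "t \<in> {0..T}" for t
    using vd_fst[OF dZ[OF that]] by (simp add: U_def[abs_def] U1_def Gp_def)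
  have dU1: "(U1 has_vector_derivative W t) (at t within {0..T})" if "t \<in> {0..T}" for t
    using vd_snd[OF dZ[OF that]] by (simp add: U1_def[abs_def] W_def U_def Gp_def)
  have cZ: "continuous_on {0..T} Z" by (rule continuous_on_vector_derivative) (use dZ in blast)
  have "compact (Z ` {0..T})" by (rule compact_continuous_image[OF cZ compact_Icc])
  then obtain R where R: "\<And>t. t \<in> {0..T} \<Longrightarrow> norm (Z t) \<le> R"
    using compact_imp_bounded[of "Z ` {0..T}"] unfolding bounded_iff by blast
  obtain L where L: "L-lipschitz_on (cball 0 R) (Gp p \<alpha> w)" using G_lip[OF p \<alpha> wC w0] by blast
  have cGZ: "continuous_on {0..T} (\<lambda>t. Gp p \<alpha> w (Z t))"
    by (rule continuous_on_compose2[OF lipschitz_on_continuous_on[OF L] cZ]) (use R in auto)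
  have cW: "continuous_on {0..T} W"
  proof -
    have "continuous_on {0..T} (\<lambda>t. snd (Gp p \<alpha> w (Z t)))" by (intro continuous_intros cGZ)
    then show ?thesis by (simp add: W_def[abs_def] U_def Gp_def)
  qed
  have Wl: "(W \<longlongrightarrow> W t) (at t within {0..T})" if "t \<in> {0..T}" for t
    using cW that by (simp add: continuous_on_def)
  have eqW: "AE x in lborel. xcomp p (W t) x = peri_rhs \<alpha> w (xcomp p (U t)) x" for t
    unfolding W_def Phi_def by (rule comp_emb[OF p FX[OF p \<alpha> wC w0 comp_XSp[OF p]]])
  show ?thesis
    unfolding is_solution_def
  proof (rule exI[of _ "\<lambda>t. xcomp p (U1 t)"], rule exI[of _ "\<lambda>t. xcomp p (W t)"], intro conjI ballI)
    show "X_C2 p T (\<lambda>t. xcomp p (fst (Z t))) (\<lambda>t. xcomp p (U1 t)) (\<lambda>t. xcomp p (W t))"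
      unfolding X_C2_def X_has_derivative_def X_continuous_def
      using Xder_from[OF p dU] Xder_from[OF p dU1] Xcont_from[OF p Wl]
      by (simp add: comp_XSp[OF p] U_def)
    show "AE x in lborel. xcomp p (W t) x = peri_rhs \<alpha> w (xcomp p (fst (Z t))) x" for t
      using eqW[of t] by (simp add: U_def)
    show "AE x in lborel. xcomp p (fst (Z 0)) x = a x" using comp_emb[OF p a] by (simp add: Z0)
    show "AE x in lborel. xcomp p (U1 0) x = b x" using comp_emb[OF p b] by (simp add: Z0 U1_def)
  qed
qed

lemma sol_XSp:
  "is_solution p \<alpha> w T a b v \<Longrightarrow> t \<in> {0..T} \<Longrightarrow> v t \<in> XSp p"
  unfolding is_solution_def X_C2_def X_has_derivative_def by blast

lemma lift_sol:
  fixes \<alpha> w :: "real \<Rightarrow> real"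
  assumes p: "1 \<le> p" and \<alpha>: "integrable lborel \<alpha>" and wC: "w C1_differentiable_on UNIV" and w0: "w 0 = 0"
    and a: "a \<in> XSp p" and b: "b \<in> XSp p" and T: "0 \<le> T"
    and sol: "is_solution p \<alpha> w T a b v"
  shows "\<exists>Y. solw (Gp p \<alpha> w) T (emb p a, emb p b) Y \<and> (\<forall>t\<in>{0..T}. fst (Y t) = emb p (v t))"
proof -
  obtain v1 v2 where C2: "X_C2 p T v v1 v2"
    and eq: "\<And>t. t \<in> {0<..T} \<Longrightarrow> AE x in lborel. v2 t x = peri_rhs \<alpha> w (v t) x"
    and i0: "AE x in lborel. v 0 x = a x" and i1: "AE x in lborel. v1 0 x = b x"
    using sol unfolding is_solution_def by blast
  have D1: "X_has_derivative p T v v1" and D2: "X_has_derivative p T v1 v2" using C2 by (simp_all add: X_C2_def)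
  have vX: "v t \<in> XSp p" "v1 t \<in> XSp p" "v2 t \<in> XSp p" if "t \<in> {0..T}" for t
    using D1 D2 that unfolding X_has_derivative_def by blast+
  define Y where "Y t = (emb p (v t), emb p (v1 t))" for t
  define d where "d t = (emb p (v1 t), emb p (v2 t))" for t
  have dY: "(Y has_vector_derivative d t) (at t within {0..T})" if t: "t \<in> {0..T}" for t
  proof -
    have "((\<lambda>s. emb p (v s)) has_vector_derivative emb p (v1 t)) (at t within {0..T})"
      by (rule Xder_to[OF p _ t vX(2)[OF t]]) (use D1 t vX in \<open>auto simp: X_has_derivative_def\<close>)
    moreover have "((\<lambda>s. emb p (v1 s)) has_vector_derivative emb p (v2 t)) (at t within {0..T})"
      by (rule Xder_to[OF p _ t vX(3)[OF t]]) (use D2 t vX in \<open>auto simp: X_has_derivative_def\<close>)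
    ultimately show ?thesis unfolding Y_def[abs_def] d_def by (rule has_vector_derivative_Pair)
  qed
  have dG: "d t = Gp p \<alpha> w (Y t)" if t: "t \<in> {0<..T}" for t
  proof -
    have t': "t \<in> {0..T}" using t by auto
    have am: "\<alpha> \<in> borel_measurable borel" by (rule alpha_meas[OF \<alpha>])
    have wm: "w \<in> borel_measurable borel" by (rule C1_meas[OF wC])
    have m1: "xcomp p (emb p (v t)) \<in> borel_measurable borel" by (rule comp_meas[OF p])
    have m2: "v t \<in> borel_measurable borel" using vX(1)[OF t'] by (simp add: XSp_def)
    have A1: "AE x in lborel. peri_rhs \<alpha> w (xcomp p (emb p (v t))) x = peri_rhs \<alpha> w (v t) x"
      by (rule F_cong[OF am wm m1 m2 comp_emb[OF p vX(1)[OF t']]])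
    have A2: "AE x in lborel. peri_rhs \<alpha> w (xcomp p (emb p (v t))) x = v2 t x"
      using A1 eq[OF t] by eventually_elim simp
    have "Phi p \<alpha> w (emb p (v t)) = emb p (v2 t)"
      unfolding Phi_def
      by (rule emb_eq[OF p FX[OF p \<alpha> wC w0 comp_XSp[OF p]] vX(3)[OF t'], THEN iffD2, OF A2])
    then show ?thesis by (simp add: d_def Y_def Gp_def)
  qed
  have Y0: "Y 0 = (emb p a, emb p b)"
  proof -
    have z: "0 \<in> {0..T}" using T by simp
    have "emb p (v 0) = emb p a" by (rule emb_eq[OF p vX(1)[OF z] a, THEN iffD2, OF i0])
    moreover have "emb p (v1 0) = emb p b" by (rule emb_eq[OF p vX(2)[OF z] b, THEN iffD2, OF i1])
    ultimately show ?thesis by (simp add: Y_def)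
  qed
  have "solw (Gp p \<alpha> w) T (emb p a, emb p b) Y"
    unfolding solw_def using Y0 dY dG by blast
  then show ?thesis by (auto simp: Y_def)
qed

theorem main_thm:
  fixes p :: ennreal and \<alpha> w \<phi> \<psi> :: "real \<Rightarrow> real"
  assumes p: "1 \<le> p"
    and \<alpha>: "integrable lborel \<alpha>"
    and wC: "w C1_differentiable_on UNIV" and w0: "w 0 = 0"
    and \<phi>: "\<phi> \<in> XSp p" and \<psi>: "\<psi> \<in> XSp p"
  shows "\<exists>T>0. well_posed p \<alpha> w T \<phi> \<psi>"
proof -
  define z0 where "z0 = (emb p \<phi>, emb p \<psi>)"
  define R0 where "R0 = norm z0 + 1"
  have R0: "0 \<le> R0" by (simp add: R0_def add_nonneg_nonneg)
  obtain T where T: "T > 0"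
    and ex: "\<And>z0'. norm z0' \<le> R0 \<Longrightarrow> \<exists>z. solw (Gp p \<alpha> w) T z0' z \<and>
        (\<forall>t\<in>{0..T}. (z has_vector_derivative Gp p \<alpha> w (z t)) (at t within {0..T}))"
    and est: "\<And>z0' y0 z y. norm z0' \<le> R0 \<Longrightarrow> norm y0 \<le> R0 \<Longrightarrow> solw (Gp p \<alpha> w) T z0' z \<Longrightarrow>
        solw (Gp p \<alpha> w) T y0 y \<Longrightarrow> (\<forall>t\<in>{0..T}. norm (z t - y t) \<le> 2 * norm (z0' - y0))"
    using ode_local[OF G_lip[OF p \<alpha> wC w0] R0] by blast
  have solex: "\<exists>u. is_solution p \<alpha> w T a b u"
    if a: "a \<in> XSp p" and b: "b \<in> XSp p" and n: "norm (emb p a, emb p b) \<le> R0" for a b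
  proof -
    obtain Z where Z: "solw (Gp p \<alpha> w) T (emb p a, emb p b) Z"
      and dZ: "\<forall>t\<in>{0..T}. (Z has_vector_derivative Gp p \<alpha> w (Z t)) (at t within {0..T})"
      using ex[OF n] by blast
    have "Z 0 = (emb p a, emb p b)" using Z by (simp add: solw_def)
    then show ?thesis using lower_sol[OF p \<alpha> wC w0 a b _ ] dZ by blast
  qed
  have est_raw: "Xnorm p (\<lambda>x. v t x - v' t x) \<le> 2 * norm ((emb p a, emb p b) - (emb p a', emb p b'))"
    if a: "a \<in> XSp p" and b: "b \<in> XSp p" and a': "a' \<in> XSp p" and b': "b' \<in> XSp p"
      and n: "norm (emb p a, emb p b) \<le> R0" and n': "norm (emb p a', emb p b') \<le> R0"
      and v: "is_solution p \<alpha> w T a b v" and v': "is_solution p \<alpha> w T a' b' v'" and t: "t \<in> {0..T}"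
    for a b a' b' v v' t
  proof -
    obtain Y where Y: "solw (Gp p \<alpha> w) T (emb p a, emb p b) Y" "\<forall>t\<in>{0..T}. fst (Y t) = emb p (v t)"
      using lift_sol[OF p \<alpha> wC w0 a b _ v] T by auto
    obtain Y' where Y': "solw (Gp p \<alpha> w) T (emb p a', emb p b') Y'" "\<forall>t\<in>{0..T}. fst (Y' t) = emb p (v' t)"
      using lift_sol[OF p \<alpha> wC w0 a' b' _ v'] T by auto
    have vt: "v t \<in> XSp p" "v' t \<in> XSp p" using sol_XSp[OF v t] sol_XSp[OF v' t] by auto
    have "Xnorm p (\<lambda>x. v t x - v' t x) = norm (emb p (v t) - emb p (v' t))"
      using norm_emb[OF p XSp_diff[OF p vt]] emb_diff[OF p vt] by simp
    also have "\<dots> = norm (fst (Y t - Y' t))" using Y(2) Y'(2) t by simp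
    also have "\<dots> \<le> norm (Y t - Y' t)"
      using norm_fst_le[of "fst (Y t - Y' t)" "snd (Y t - Y' t)"] by (simp only: prod.collapse)
    also have "\<dots> \<le> 2 * norm ((emb p a, emb p b) - (emb p a', emb p b'))"
      using est[OF n n' Y(1) Y'(1)] t by blast
    finally show ?thesis .
  qed
  have n0: "norm (emb p \<phi>, emb p \<psi>) \<le> R0" by (simp add: R0_def z0_def)
  obtain u where u: "is_solution p \<alpha> w T \<phi> \<psi> u" using solex[OF \<phi> \<psi> n0] by blast
  have "well_posed p \<alpha> w T \<phi> \<psi>"
    unfolding well_posed_def
  proof (intro exI[of _ u] conjI allI impI ballI)
    show "is_solution p \<alpha> w T \<phi> \<psi> u" by (rule u)
    fix v t assume v: "is_solution p \<alpha> w T \<phi> \<psi> v" and t: "t \<in> {0..T}"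
    have "Xnorm p (\<lambda>x. v t x - u t x) \<le> 2 * norm ((emb p \<phi>, emb p \<psi>) - (emb p \<phi>, emb p \<psi>))"
      by (rule est_raw[OF \<phi> \<psi> \<phi> \<psi> n0 n0 v u t])
    then have "Xnorm p (\<lambda>x. v t x - u t x) = 0" using Xnorm_nonneg[of p "\<lambda>x. v t x - u t x"] by simp
    then have "AE x in lborel. v t x - u t x = 0"
      using Xnorm_eq0[OF XSp_diff[OF p sol_XSp[OF v t] sol_XSp[OF u t]]] by blast
    then show "AE x in lborel. v t x = u t x" by (auto elim!: eventually_mono)
  next
    fix \<epsilon> :: real assume eps: "\<epsilon> > 0"
    define \<delta> where "\<delta> = min 1 (\<epsilon> / 4)"
    have \<delta>: "\<delta> > 0" "\<delta> \<le> 1" "2 * \<delta> < \<epsilon>" using eps by (auto simp: \<delta>_def)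
    show "\<exists>\<delta>>0. \<forall>\<phi>' \<psi>'. \<phi>' \<in> XSp p \<and> \<psi>' \<in> XSp p \<and>
              Xnorm p (\<lambda>x. \<phi>' x - \<phi> x) + Xnorm p (\<lambda>x. \<psi>' x - \<psi> x) < \<delta> \<longrightarrow>
              (\<exists>v. is_solution p \<alpha> w T \<phi>' \<psi>' v)
              \<and> (\<forall>v. is_solution p \<alpha> w T \<phi>' \<psi>' v \<longrightarrow>
                    (\<forall>t\<in>{0..T}. Xnorm p (\<lambda>x. v t x - u t x) < \<epsilon>))"
    proof (intro exI[of _ \<delta>] conjI allI impI \<delta>(1))
      fix \<phi>' \<psi>'
      assume H: "\<phi>' \<in> XSp p \<and> \<psi>' \<in> XSp p \<and> Xnorm p (\<lambda>x. \<phi>' x - \<phi> x) + Xnorm p (\<lambda>x. \<psi>' x - \<psi> x) < \<delta>"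
      then have \<phi>': "\<phi>' \<in> XSp p" and \<psi>': "\<psi>' \<in> XSp p"
        and sm: "Xnorm p (\<lambda>x. \<phi>' x - \<phi> x) + Xnorm p (\<lambda>x. \<psi>' x - \<psi> x) < \<delta>" by auto
      have "norm ((emb p \<phi>', emb p \<psi>') - (emb p \<phi>, emb p \<psi>)) = norm (emb p \<phi>' - emb p \<phi>, emb p \<psi>' - emb p \<psi>)"
        by simp
      also have "\<dots> \<le> norm (emb p \<phi>' - emb p \<phi>) + norm (emb p \<psi>' - emb p \<psi>)" by (rule norm_Pair_le)
      also have "\<dots> = Xnorm p (\<lambda>x. \<phi>' x - \<phi> x) + Xnorm p (\<lambda>x. \<psi>' x - \<psi> x)"
        by (simp add: emb_diff[OF p \<phi>' \<phi>] emb_diff[OF p \<psi>' \<psi>] norm_emb[OF p XSp_diff[OF p \<phi>' \<phi>]] norm_emb[OF p XSp_diff[OF p \<psi>' \<psi>]])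
      finally have dn: "norm ((emb p \<phi>', emb p \<psi>') - (emb p \<phi>, emb p \<psi>)) < \<delta>" using sm by linarith
      have n': "norm (emb p \<phi>', emb p \<psi>') \<le> R0"
      proof -
        have "norm (emb p \<phi>', emb p \<psi>') \<le> norm (emb p \<phi>, emb p \<psi>) + norm ((emb p \<phi>', emb p \<psi>') - (emb p \<phi>, emb p \<psi>))"
          using norm_triangle_ineq[of "(emb p \<phi>, emb p \<psi>)" "(emb p \<phi>', emb p \<psi>') - (emb p \<phi>, emb p \<psi>)"] by simp
        then show ?thesis using dn \<delta>(2) by (simp add: R0_def z0_def)
      qed
      show "\<exists>v. is_solution p \<alpha> w T \<phi>' \<psi>' v" by (rule solex[OF \<phi>' \<psi>' n'])
      fix v assume v: "is_solution p \<alpha> w T \<phi>' \<psi>' v"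
      show "\<forall>t\<in>{0..T}. Xnorm p (\<lambda>x. v t x - u t x) < \<epsilon>"
      proof
        fix t assume t: "t \<in> {0..T}"
        have "Xnorm p (\<lambda>x. v t x - u t x) \<le> 2 * norm ((emb p \<phi>', emb p \<psi>') - (emb p \<phi>, emb p \<psi>))"
          by (rule est_raw[OF \<phi>' \<psi>' \<phi> \<psi> n' n0 v u t])
        then show "Xnorm p (\<lambda>x. v t x - u t x) < \<epsilon>" using dn \<delta>(3) by linarith
      qed
    qed
  qed
  then show ?thesis using T by blast
qed


theorem theorem2p2:
  fixes p :: ennreal and \<alpha> w \<phi> \<psi> :: "real \<Rightarrow> real"
  assumes "1 \<le> p"
    and "integrable lborel \<alpha>"
    and "w C1_differentiable_on UNIV" and "w 0 = 0"
    and "\<phi> \<in> XSp p" and "\<psi> \<in> XSp p"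
  shows "\<exists>T>0. well_posed p \<alpha> w T \<phi> \<psi>"
  by (rule main_thm[OF assms])

end
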